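(* Let $\mathbf{k}$ be an arbitrary field and $\sigma\subset N_{\mathbb{Q}}$ a nonzero strongly convex polyhedral cone. Every nontrivial homogeneous LFIHD $\partial$ on $\mathbf{k}[\sigma^\vee\cap M]$ is of the following form: there are a Demazure root $e$ of $\sigma$ with distinguished ray $\rho$ and $\lambda\in\mathbf{k}^*$ such that for all $i\in\mathbb{N}$ and $m\in\sigma^\vee\cap M$, $\partial^{(i)}(\chi^m)=\lambda^i\binom{\langle m,\rho\rangle}{i}\chi^{m+ie}$ (with $\binom{a}{b}=0$ for $a<b$). Conversely, each such pair $(e,\lambda)$ defines a nontrivial homogeneous LFIHD of degree $e$.
   Context: An LFIHD on a $\mathbf{k}$-algebra $A$ is a sequence $(\partial^{(i)})_{i\in\mathbb{N}}$ of $\mathbf{k}$-linear maps with $\partial^{(0)}=\mathrm{id}$, the Leibniz rule $\partial^{(i)}(fg)=\sum_{j=0}^i\partial^{(j)}(f)\partial^{(i-j)}(g)$, local finiteness (for each $f$, $\partial^{(i)}(f)=0$ for $i\gg0$), and iterativity $\partial^{(i)}\circ\partial^{(j)}=\binom{i+j}{i}\partial^{(i+j)}$; it corresponds to a $\mathbb{G}_a$-action on $\operatorname{Spec}A$. It is trivial if all $\partial^{(i)}$, $i>0$, vanish. For $M$-graded $A$, it is homogeneous of degree $e\in M$ if $\partial^{(i)}(A_m)\subset A_{m+ie}$. A Demazure root of $\sigma$ is $e\in M$ with a ray $\rho$ of $\sigma$ (identified with its primitive vector) such that $\langle e,\rho\rangle=-1$ and $\langle e,\rho'\rangle\ge0$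 for all other rays $\rho'$; $\rho$ is the distinguished ray. *)

theory Defs
  imports "HOL-Library.Poly_Mapping" "HOL-Analysis.Finite_Cartesian_Product"
begin

text \<open>Lattice N = Z^n (type int^'n), dual lattice M = Z^n with the standard pairing;
  N_Q = Q^n (type rat^'n).\<close>

definition ivec_to_rat :: "int^'n \<Rightarrow> rat^'n" where
  "ivec_to_rat v = (\<chi> i. of_int (v $ i))"

definition pair_MNQ :: "int^'n \<Rightarrow> rat^'n \<Rightarrow> rat" where
  "pair_MNQ m u = (\<Sum>i\<in>UNIV. of_int (m $ i) * u $ i)"

definition pair_MN :: "int^'n \<Rightarrow> int^'n \<Rightarrow> int" where
  "pair_MN m u = (\<Sum>i\<in>UNIV. m $ i * u $ i)"

definition pair_QQ :: "rat^'n \<Rightarrow> rat^'n \<Rightarrow> rat" where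
  "pair_QQ m u = (\<Sum>i\<in>UNIV. m $ i * u $ i)"

definition polyhedral_cone :: "(rat^'n) set \<Rightarrow> bool" where
  "polyhedral_cone \<sigma> \<longleftrightarrow> (\<exists>G. finite G \<and>
      \<sigma> = {(\<Sum>g\<in>G. c g *s g) | c. \<forall>g\<in>G. c g \<ge> 0})"

definition strongly_convex :: "(rat^'n) set \<Rightarrow> bool" where
  "strongly_convex \<sigma> \<longleftrightarrow> \<sigma> \<inter> uminus ` \<sigma> = {0}"

definition dual_cone :: "(rat^'n) set \<Rightarrow> (rat^'n) set" where
  "dual_cone \<sigma> = {m. \<forall>u\<in>\<sigma>. pair_QQ m u \<ge> 0}"

definition dual_lattice_points :: "(rat^'n) set \<Rightarrow> (int^'n) set" where
  "dual_lattice_points \<sigma> = {m. \<forall>u\<in>\<sigma>. pair_MNQ m u \<ge> 0}"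

definition primitive :: "int^'n \<Rightarrow> bool" where
  "primitive v \<longleftrightarrow> v \<noteq> 0 \<and> (\<forall>(k::int) w. v = k *s w \<longrightarrow> \<bar>k\<bar> = 1)"

text \<open>A ray of \<sigma> (one-dimensional face), identified with its primitive lattice generator.\<close>
definition is_ray :: "(rat^'n) set \<Rightarrow> int^'n \<Rightarrow> bool" where
  "is_ray \<sigma> \<rho> \<longleftrightarrow> primitive \<rho> \<and>
     (\<exists>m\<in>dual_cone \<sigma>. \<sigma> \<inter> {u. pair_QQ m u = 0} = {t *s ivec_to_rat \<rho> | t. t \<ge> 0})"

definition demazure_root :: "(rat^'n) set \<Rightarrow> int^'n \<Rightarrow> int^'n \<Rightarrow> bool" where
  "demazure_root \<sigma> e \<rho> \<longleftrightarrow> is_ray \<sigma> \<rho> \<and> pair_MN e \<rho> = -1 \<and>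
     (\<forall>\<rho>'. is_ray \<sigma> \<rho>' \<and> \<rho>' \<noteq> \<rho> \<longrightarrow> pair_MN e \<rho>' \<ge> 0)"

text \<open>The algebra k[S] for S = \<sigma>^\<or> \<inter> M is the subalgebra of the group algebra
  k[M] (finitely supported functions M -> k) of elements supported in S.\<close>
definition semigroup_alg :: "(int^'n) set \<Rightarrow> (int^'n \<Rightarrow>\<^sub>0 'k::field) set" where
  "semigroup_alg S = {f. Poly_Mapping.keys f \<subseteq> S}"

definition chi :: "int^'n \<Rightarrow> (int^'n \<Rightarrow>\<^sub>0 'k::field)" where
  "chi m = Poly_Mapping.single m 1"

definition scal :: "'k::field \<Rightarrow> (int^'n \<Rightarrow>\<^sub>0 'k) \<Rightarrow> (int^'n \<Rightarrow>\<^sub>0 'k)" where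
  "scal c f = Poly_Mapping.single 0 c * f"

text \<open>Locally finite iterative higher derivation on k[S]; the maps are only relevant on k[S].\<close>
definition LFIHD :: "(int^'n) set \<Rightarrow> (nat \<Rightarrow> (int^'n \<Rightarrow>\<^sub>0 'k::field) \<Rightarrow> (int^'n \<Rightarrow>\<^sub>0 'k)) \<Rightarrow> bool" where
  "LFIHD S D \<longleftrightarrow>
     (\<forall>i. \<forall>f\<in>semigroup_alg S. D i f \<in> semigroup_alg S) \<and>
     (\<forall>i. \<forall>f\<in>semigroup_alg S. \<forall>g\<in>semigroup_alg S. D i (f + g) = D i f + D i g) \<and>
     (\<forall>i c. \<forall>f\<in>semigroup_alg S. D i (scal c f) = scal c (D i f)) \<and>
     (\<forall>f\<in>semigroup_alg S. D 0 f = f) \<and>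
     (\<forall>i. \<forall>f\<in>semigroup_alg S. \<forall>g\<in>semigroup_alg S.
         D i (f * g) = (\<Sum>j\<le>i. D j f * D (i - j) g)) \<and>
     (\<forall>f\<in>semigroup_alg S. finite {i. D i f \<noteq> 0}) \<and>
     (\<forall>i j. \<forall>f\<in>semigroup_alg S. D i (D j f) = scal (of_nat ((i + j) choose i)) (D (i + j) f))"

definition trivial_HD :: "(int^'n) set \<Rightarrow> (nat \<Rightarrow> (int^'n \<Rightarrow>\<^sub>0 'k::field) \<Rightarrow> (int^'n \<Rightarrow>\<^sub>0 'k)) \<Rightarrow> bool" where
  "trivial_HD S D \<longleftrightarrow> (\<forall>i>0. \<forall>f\<in>semigroup_alg S. D i f = 0)"

definition homogeneous_of_degree :: "(int^'n) set \<Rightarrow> (nat \<Rightarrow> (int^'n \<Rightarrow>\<^sub>0 'k::field) \<Rightarrow> (int^'n \<Rightarrow>\<^sub>0 'k)) \<Rightarrow> int^'n \<Rightarrow> bool" where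
  "homogeneous_of_degree S D e \<longleftrightarrow>
     (\<forall>i. \<forall>m\<in>S. Poly_Mapping.keys (D i (chi m)) \<subseteq> {m + int i *s e})"

end

theory Submission
  imports Defs "HOL-Computational_Algebra.Polynomial"
begin


lemma PQ_add_r: "pair_QQ y (x + z) = pair_QQ y x + pair_QQ y z"
  unfolding pair_QQ_def by (simp add: distrib_left sum.distrib)
lemma PQ_diff_r: "pair_QQ y (x - z) = pair_QQ y x - pair_QQ y z"
  unfolding pair_QQ_def by (simp add: right_diff_distrib sum_subtractf)
lemma PQ_neg_r: "pair_QQ y (- x) = - pair_QQ y x"
  unfolding pair_QQ_def by (simp add: sum_negf)
lemma PQ_smult_r: "pair_QQ y (c *s x) = c * pair_QQ y x"
  unfolding pair_QQ_def by (simp add: sum_distrib_left algebra_simps)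
lemma PQ_sum_r: "pair_QQ y (\<Sum>i\<in>I. f i) = (\<Sum>i\<in>I. pair_QQ y (f i))"
  unfolding pair_QQ_def by (simp add: sum_distrib_left sum.swap[of _ UNIV])
lemma PQ_add_l: "pair_QQ (x + z) y = pair_QQ x y + pair_QQ z y"
  unfolding pair_QQ_def by (simp add: distrib_right sum.distrib)
lemma PQ_diff_l: "pair_QQ (x - z) y = pair_QQ x y - pair_QQ z y"
  unfolding pair_QQ_def by (simp add: left_diff_distrib sum_subtractf)
lemma PQ_neg_l: "pair_QQ (- x) y = - pair_QQ x y"
  unfolding pair_QQ_def by (simp add: sum_negf)
lemma PQ_smult_l: "pair_QQ (c *s x) y = c * pair_QQ x y"
  unfolding pair_QQ_def by (simp add: sum_distrib_left algebra_simps)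
lemma PQ_sum_l: "pair_QQ (\<Sum>i\<in>I. f i) y = (\<Sum>i\<in>I. pair_QQ (f i) y)"
  unfolding pair_QQ_def by (simp add: sum_distrib_right sum.swap[of _ UNIV])
lemma PQ_zero_r[simp]: "pair_QQ y 0 = 0" unfolding pair_QQ_def by simp
lemma PQ_zero_l[simp]: "pair_QQ 0 y = 0" unfolding pair_QQ_def by simp

lemma PQ_self_pos: assumes "(x::rat^'n) \<noteq> 0" shows "pair_QQ x x > 0"
proof -
  obtain j where j: "x $ j \<noteq> 0" using assms by (auto simp: vec_eq_iff)
  have "0 < x$j * x$j" using j by (metis mult_pos_pos mult_neg_neg linorder_neq_iff)
  also have "\<dots> \<le> (\<Sum>i\<in>UNIV. x$i * x$i)"
    by (rule member_le_sum) auto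
  finally show ?thesis unfolding pair_QQ_def .
qed

lemmas PQ_simps = PQ_add_r PQ_diff_r PQ_neg_r PQ_smult_r PQ_sum_r PQ_add_l PQ_diff_l PQ_neg_l PQ_smult_l PQ_sum_l

lemma farkas_indexed:
  fixes v :: "'i \<Rightarrow> rat^'n" and b :: "rat^'n"
  assumes "finite I" "\<forall>c. (\<forall>i\<in>I. c i \<ge> 0) \<longrightarrow> b \<noteq> (\<Sum>i\<in>I. c i *s v i)"
  shows "\<exists>y. (\<forall>i\<in>I. pair_QQ y (v i) \<ge> 0) \<and> pair_QQ y b < 0"
  using assms
proof (induction I arbitrary: v b rule: finite_induct)
  case empty
  then have "b \<noteq> 0" by auto
  then show ?case by (intro exI[of _ "-b"]) (simp add: PQ_neg_l PQ_self_pos)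
next
  case (insert a I)
  have H: "b \<noteq> (\<Sum>i\<in>insert a I. c i *s v i)" if "\<forall>i\<in>insert a I. c i \<ge> 0" for c
    using insert.prems that by blast
  have "\<forall>c. (\<forall>i\<in>I. c i \<ge> 0) \<longrightarrow> b \<noteq> (\<Sum>i\<in>I. c i *s v i)"
  proof (intro allI impI)
    fix c :: "'i \<Rightarrow> rat" assume c: "\<forall>i\<in>I. c i \<ge> 0"
    have "b \<noteq> (\<Sum>i\<in>insert a I. (c(a:=0)) i *s v i)" by (rule H) (use c in auto)
    moreover have "(\<Sum>i\<in>I. (c(a:=0)) i *s v i) = (\<Sum>i\<in>I. c i *s v i)"
      using insert.hyps(2) by (intro sum.cong) auto
    moreover have "(\<Sum>i\<in>insert a I. (c(a:=0)) i *s v i) = (\<Sum>i\<in>I. (c(a:=0)) i *s v i)"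
      using insert.hyps by simp
    ultimately have "b \<noteq> (\<Sum>i\<in>I. c i *s v i)" by simp
    then show "b \<noteq> (\<Sum>i\<in>I. c i *s v i)" .
  qed
  then obtain y0 where y0: "\<forall>i\<in>I. pair_QQ y0 (v i) \<ge> 0" "pair_QQ y0 b < 0"
    using insert.IH by blast
  show ?case
  proof (cases "pair_QQ y0 (v a) \<ge> 0")
    case True
    then show ?thesis using y0 by (intro exI[of _ y0]) auto
  next
    case False
    define \<alpha> where "\<alpha> = pair_QQ y0 (v a)"
    have \<alpha>: "\<alpha> < 0" using False \<alpha>_def by simp
    define v' where "v' i = v i - (pair_QQ y0 (v i) / \<alpha>) *s v a" for i
    define b' where "b' = b - (pair_QQ y0 b / \<alpha>) *s v a"
    have "\<forall>c. (\<forall>i\<in>I. c i \<ge> 0) \<longrightarrow> b' \<noteq> (\<Sum>i\<in>I. c i *s v' i)"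
    proof (intro allI impI notI)
      fix c :: "'i \<Rightarrow> rat" assume c: "\<forall>i\<in>I. c i \<ge> 0" and eq: "b' = (\<Sum>i\<in>I. c i *s v' i)"
      define \<mu> where "\<mu> = (pair_QQ y0 b - (\<Sum>i\<in>I. c i * pair_QQ y0 (v i))) / \<alpha>"
      have "(\<Sum>i\<in>I. c i * pair_QQ y0 (v i)) \<ge> 0" using c y0(1) by (intro sum_nonneg) auto
      then have "pair_QQ y0 b - (\<Sum>i\<in>I. c i * pair_QQ y0 (v i)) < 0" using y0(2) by linarith
      then have \<mu>: "\<mu> > 0" unfolding \<mu>_def using \<alpha> by (simp add: divide_neg_neg)
      have "b = (\<Sum>i\<in>I. c i *s v i) + \<mu> *s v a"
      proof -
        have "b = b' + (pair_QQ y0 b / \<alpha>) *s v a" unfolding b'_def by simp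
        also have "b' = (\<Sum>i\<in>I. c i *s v i) - (\<Sum>i\<in>I. c i * pair_QQ y0 (v i) / \<alpha>) *s v a"
          unfolding eq v'_def
          by (simp add: vec_eq_iff sum_subtractf algebra_simps sum_distrib_right sum_distrib_left sum_divide_distrib)
        finally show ?thesis unfolding \<mu>_def
          by (simp add: vec_eq_iff algebra_simps sum_divide_distrib diff_divide_distrib)
      qed
      also have "\<dots> = (\<Sum>i\<in>insert a I. (c(a:=\<mu>)) i *s v i)"
      proof -
        have "(\<Sum>i\<in>I. (c(a:=\<mu>)) i *s v i) = (\<Sum>i\<in>I. c i *s v i)"
          using insert.hyps(2) by (intro sum.cong) auto
        then show ?thesis using insert.hyps by (simp add: add.commute)
      qed
      finally have "b = (\<Sum>i\<in>insert a I. (c(a:=\<mu>)) i *s v i)" .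
      moreover have "\<forall>i\<in>insert a I. (c(a:=\<mu>)) i \<ge> 0" using c \<mu> by auto
      ultimately show False using H by blast
    qed
    then obtain y1 where y1: "\<forall>i\<in>I. pair_QQ y1 (v' i) \<ge> 0" "pair_QQ y1 b' < 0"
      using insert.IH by blast
    define y where "y = y1 - (pair_QQ y1 (v a) / \<alpha>) *s y0"
    have ya: "pair_QQ y (v a) = 0" unfolding y_def using \<alpha> by (simp add: PQ_simps \<alpha>_def)
    have yi: "pair_QQ y (v i) = pair_QQ y1 (v' i)" for i
      unfolding y_def v'_def by (simp add: PQ_simps algebra_simps)
    have yb: "pair_QQ y b = pair_QQ y1 b'"
      unfolding y_def b'_def by (simp add: PQ_simps algebra_simps)
    show ?thesis using ya yi yb y1 by (intro exI[of _ y]) auto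
  qed
qed


definition qcone :: "(rat^'n) set \<Rightarrow> (rat^'n) set" where
  "qcone A = {(\<Sum>g\<in>A. c g *s g) | c. \<forall>g\<in>A. c g \<ge> 0}"

lemma qconeI: "(\<forall>g\<in>A. c g \<ge> 0) \<Longrightarrow> x = (\<Sum>g\<in>A. c g *s g) \<Longrightarrow> x \<in> qcone A"
  unfolding qcone_def by blast

lemma qconeE: assumes "x \<in> qcone A"
  obtains c where "\<forall>g\<in>A. c g \<ge> 0" "x = (\<Sum>g\<in>A. c g *s g)"
  using assms unfolding qcone_def by blast

lemma qcone_0: "0 \<in> qcone A"
  by (rule qconeI[of A "\<lambda>_. 0"]) auto

lemma qcone_mem: assumes "finite A" "a \<in> A" shows "a \<in> qcone A"
proof (rule qconeI[of A "\<lambda>x. if x = a then 1 else 0"])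
  show "a = (\<Sum>g\<in>A. (if g = a then 1 else 0) *s g)"
    using assms by (simp add: if_distrib[where f="\<lambda>c. c *s _"] sum.delta cong: if_cong)
qed auto

lemma qcone_add: assumes "x \<in> qcone A" "y \<in> qcone A" shows "x + y \<in> qcone A"
proof -
  obtain c where c: "\<forall>g\<in>A. c g \<ge> 0" "x = (\<Sum>g\<in>A. c g *s g)" using assms(1) by (rule qconeE)
  obtain d where d: "\<forall>g\<in>A. d g \<ge> 0" "y = (\<Sum>g\<in>A. d g *s g)" using assms(2) by (rule qconeE)
  show ?thesis
    by (rule qconeI[of A "\<lambda>g. c g + d g"]) (use c d in \<open>auto simp: vector_sadd_rdistrib sum.distrib\<close>)
qed

lemma qcone_smult: assumes "x \<in> qcone A" "t \<ge> 0" shows "t *s x \<in> qcone A"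
proof -
  obtain c where c: "\<forall>g\<in>A. c g \<ge> 0" "x = (\<Sum>g\<in>A. c g *s g)" using assms(1) by (rule qconeE)
  show ?thesis
    by (rule qconeI[of A "\<lambda>g. t * c g"]) (use c assms(2) in \<open>auto simp: vec_eq_iff sum_distrib_left mult.assoc\<close>)
qed

lemma qcone_sum: assumes "finite I" "\<forall>i\<in>I. x i \<in> qcone A" shows "(\<Sum>i\<in>I. x i) \<in> qcone A"
  using assms by (induction I rule: finite_induct) (auto intro: qcone_add qcone_0)

lemma qcone_subset: assumes "finite A" "finite B" "B \<subseteq> qcone A" shows "qcone B \<subseteq> qcone A"
proof
  fix x assume "x \<in> qcone B"
  then obtain c where c: "\<forall>g\<in>B. c g \<ge> 0" "x = (\<Sum>g\<in>B. c g *s g)" by (rule qconeE)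
  show "x \<in> qcone A" unfolding c(2)
    by (rule qcone_sum) (use assms c in \<open>auto intro: qcone_smult\<close>)
qed

lemma qcone_mono: assumes "finite B" "A \<subseteq> B" shows "qcone A \<subseteq> qcone B"
  using assms by (intro qcone_subset) (auto intro: qcone_mem finite_subset)

lemma farkas_set:
  assumes "finite A" "b \<notin> qcone A"
  shows "\<exists>y. (\<forall>a\<in>A. pair_QQ y a \<ge> 0) \<and> pair_QQ y b < 0"
  using farkas_indexed[of A b "\<lambda>x. x"] assms unfolding qcone_def by blast

lemma qcone_dual: assumes "\<forall>a\<in>A. pair_QQ y a \<ge> 0" "u \<in> qcone A" shows "pair_QQ y u \<ge> 0"
proof -
  obtain c where c: "\<forall>g\<in>A. c g \<ge> 0" "u = (\<Sum>g\<in>A. c g *s g)" using assms(2) by (rule qconeE)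
  show ?thesis unfolding c(2) using assms(1) c(1) by (simp add: PQ_simps sum_nonneg)
qed

lemma sc_zero: assumes "strongly_convex \<sigma>" "u \<in> \<sigma>" "- u \<in> \<sigma>" shows "u = 0"
proof -
  have "u \<in> uminus ` \<sigma>" using assms(3) by (metis image_eqI minus_minus)
  then show ?thesis using assms(1,2) unfolding strongly_convex_def by blast
qed

lemma minimal_gen:
  assumes "finite G"
  shows "\<exists>G'\<subseteq>G. qcone G' = qcone G \<and> (\<forall>g\<in>G'. g \<notin> qcone (G' - {g}))"
  using assms
proof (induction "card G" arbitrary: G rule: less_induct)
  case less
  show ?case
  proof (cases "\<forall>g\<in>G. g \<notin> qcone (G - {g})")
    case True then show ?thesis by blast
  next
    case False
    then obtain g where g: "g \<in> G" "g \<in> qcone (G - {g})" by blast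
    have eq: "qcone (G - {g}) = qcone G"
    proof
      show "qcone (G - {g}) \<subseteq> qcone G" using less.prems by (intro qcone_mono) auto
      have "G \<subseteq> qcone (G - {g})"
        using g less.prems by (auto intro: qcone_mem)
      then show "qcone G \<subseteq> qcone (G - {g})" using less.prems by (intro qcone_subset) auto
    qed
    have "card (G - {g}) < card G" using g less.prems by (metis card_Diff1_less)
    then obtain G' where "G' \<subseteq> G - {g}" "qcone G' = qcone (G - {g})" "\<forall>g\<in>G'. g \<notin> qcone (G' - {g})"
      using less.hyps[of "G - {g}"] less.prems by auto
    then show ?thesis using eq by blast
  qed
qed

lemma exposing:
  assumes fin: "finite G" and sc: "strongly_convex (qcone G)"
    and minG: "\<forall>h\<in>G. h \<notin> qcone (G - {h})" and g: "g \<in> G"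
  shows "\<exists>m. (\<forall>x\<in>G. pair_QQ m x \<ge> 0) \<and> pair_QQ m g = 0 \<and> (\<forall>h\<in>G - {g}. pair_QQ m h > 0)"
proof -
  have gnz: "g \<noteq> 0" using minG g qcone_0 by metis
  have ng: "- g \<notin> G"
  proof
    assume "- g \<in> G"
    then have "- g \<in> qcone G" by (rule qcone_mem[OF fin])
    moreover have "g \<in> qcone G" using fin g by (rule qcone_mem)
    ultimately have "g = 0" using sc sc_zero by blast
    then show False using gnz by simp
  qed
  have "\<exists>y. (\<forall>x\<in>insert (-g) G. pair_QQ y x \<ge> 0) \<and> pair_QQ y (- h) < 0" if h: "h \<in> G - {g}" for h
  proof (rule farkas_set)
    show "finite (insert (-g) G)" using fin by simp
    show "- h \<notin> qcone (insert (- g) G)"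
    proof
      assume "- h \<in> qcone (insert (- g) G)"
      then obtain c where c: "\<forall>x\<in>insert (-g) G. c x \<ge> 0" "- h = (\<Sum>x\<in>insert (-g) G. c x *s x)"
        by (rule qconeE)
      define T where "T = (\<Sum>x\<in>G - {g}. c x *s x)"
      have T: "T \<in> qcone (G - {g})" unfolding T_def
        by (rule qconeI[of _ c]) (use c in auto)
      have "(\<Sum>x\<in>insert (-g) G. c x *s x) = c (-g) *s (-g) + (c g *s g + T)"
        using ng fin g unfolding T_def by (simp add: sum.remove)
      then have hX: "h = - (c (-g) *s (-g) + (c g *s g + T))" using c(2) by (metis minus_minus)
      have eq: "h + T = (c (-g) - c g) *s g" unfolding hX by (simp add: vec_eq_iff algebra_simps)
      show False
      proof (cases "c (-g) - c g > 0")
        case True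
        define \<mu> where "\<mu> = c (-g) - c g"
        have "g = (1/\<mu>) *s (h + T)" using eq True unfolding \<mu>_def by (simp add: vector_smult_assoc)
        moreover have "h + T \<in> qcone (G - {g})"
          using h fin T by (intro qcone_add[OF qcone_mem]) auto
        ultimately have "g \<in> qcone (G - {g})" using True qcone_smult[of "h + T" "G - {g}" "1/\<mu>"] unfolding \<mu>_def by simp
        then show False using minG g by blast
      next
        case False
        have "- h = T + (c g - c (-g)) *s g" unfolding hX by (simp add: vec_eq_iff algebra_simps)
        moreover have "T \<in> qcone G" using T fin qcone_mono[of G "G - {g}"] by auto
        moreover have "(c g - c (-g)) *s g \<in> qcone G" using False fin g by (intro qcone_smult qcone_mem) auto
        ultimately have "- h \<in> qcone G" by (simp add: qcone_add)
        moreover have "h \<in> qcone G" using fin h by (intro qcone_mem) auto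
        ultimately have "h = 0" using sc sc_zero by blast
        then show False using minG h qcone_0 by (metis DiffD1)
      qed
    qed
  qed
  then obtain Y where Y: "\<And>h. h \<in> G - {g} \<Longrightarrow> (\<forall>x\<in>insert (-g) G. pair_QQ (Y h) x \<ge> 0) \<and> pair_QQ (Y h) (- h) < 0"
    by metis
  define m where "m = (\<Sum>h\<in>G - {g}. Y h)"
  have Yg: "pair_QQ (Y h) g = 0" if "h \<in> G - {g}" for h
    using Y[OF that] g by (auto simp: PQ_neg_r)
  have Yx: "pair_QQ (Y h) x \<ge> 0" if "h \<in> G - {g}" "x \<in> G" for h x using Y[OF that(1)] that(2) by auto
  have Yh: "pair_QQ (Y h) h > 0" if "h \<in> G - {g}" for h using Y[OF that] by (simp add: PQ_neg_r)
  show ?thesis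
  proof (intro exI[of _ m] conjI ballI)
    fix x assume "x \<in> G" then show "pair_QQ m x \<ge> 0" unfolding m_def PQ_sum_l by (intro sum_nonneg) (use Yx in auto)
  next
    show "pair_QQ m g = 0" unfolding m_def PQ_sum_l using Yg by simp
  next
    fix h assume h: "h \<in> G - {g}"
    have "pair_QQ (Y h) h \<le> (\<Sum>h'\<in>G - {g}. pair_QQ (Y h') h)"
      by (rule member_le_sum) (use h fin Yx in auto)
    then show "pair_QQ m h > 0" unfolding m_def PQ_sum_l using Yh[OF h] by simp
  qed
qed

lemma interior_functional:
  assumes fin: "finite G" and sc: "strongly_convex (qcone G)" and nz: "0 \<notin> G"
  shows "\<exists>m. \<forall>x\<in>G. pair_QQ m x > 0"
proof -
  have "\<exists>y. (\<forall>x\<in>G. pair_QQ y x \<ge> 0) \<and> pair_QQ y (- h) < 0" if h: "h \<in> G" for h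
  proof (rule farkas_set[OF fin])
    show "- h \<notin> qcone G"
    proof
      assume "- h \<in> qcone G"
      moreover have "h \<in> qcone G" using fin h by (rule qcone_mem)
      ultimately have "h = 0" using sc sc_zero by blast
      then show False using nz h by simp
    qed
  qed
  then obtain Y where Y: "\<And>h. h \<in> G \<Longrightarrow> (\<forall>x\<in>G. pair_QQ (Y h) x \<ge> 0) \<and> pair_QQ (Y h) (- h) < 0"
    by metis
  define m where "m = (\<Sum>h\<in>G. Y h)"
  show ?thesis
  proof (intro exI[of _ m] ballI)
    fix h assume h: "h \<in> G"
    have "pair_QQ (Y h) h \<le> (\<Sum>h'\<in>G. pair_QQ (Y h') h)"
      by (rule member_le_sum) (use h fin Y in auto)
    then show "pair_QQ m h > 0" unfolding m_def PQ_sum_l using Y[OF h] by (simp add: PQ_neg_r)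
  qed
qed


abbreviation iv :: "int^'n \<Rightarrow> rat^'n" where "iv \<equiv> ivec_to_rat"

lemma iv_comp[simp]: "iv v $ i = of_int (v $ i)" unfolding ivec_to_rat_def by simp
lemma iv_add: "iv (a + b) = iv a + iv b" by (simp add: vec_eq_iff)
lemma iv_diff: "iv (a - b) = iv a - iv b" by (simp add: vec_eq_iff)
lemma iv_neg: "iv (- a) = - iv a" by (simp add: vec_eq_iff)
lemma iv_smult: "iv (k *s a) = of_int k *s iv a" by (simp add: vec_eq_iff)
lemma iv_zero[simp]: "iv 0 = 0" by (simp add: vec_eq_iff)
lemma iv_inj: "iv a = iv b \<longleftrightarrow> a = b" by (simp add: vec_eq_iff)
lemma iv_eq0[simp]: "iv a = 0 \<longleftrightarrow> a = 0" by (simp add: vec_eq_iff)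

lemma pMNQ: "pair_MNQ m u = pair_QQ (iv m) u"
  unfolding pair_MNQ_def pair_QQ_def by simp
lemma pMN: "of_int (pair_MN a b) = pair_QQ (iv a) (iv b)"
  unfolding pair_MN_def pair_QQ_def by simp
lemma pMN_add_l: "pair_MN (a + b) c = pair_MN a c + pair_MN b c"
  unfolding pair_MN_def by (simp add: distrib_right sum.distrib)
lemma pMN_smult_l: "pair_MN (k *s a) c = k * pair_MN a c"
  unfolding pair_MN_def by (simp add: sum_distrib_left algebra_simps)
lemma pMN_neg_l: "pair_MN (- a) c = - pair_MN a c"
  unfolding pair_MN_def by (simp add: sum_negf)
lemma pMN_zero_l[simp]: "pair_MN 0 c = 0" unfolding pair_MN_def by simp

lemma common_denom:
  assumes "finite (A :: rat set)" shows "\<exists>K::int. K > 0 \<and> (\<forall>q\<in>A. of_int K * q \<in> \<int>)"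
  using assms
proof (induction A rule: finite_induct)
  case empty then show ?case by (intro exI[of _ 1]) auto
next
  case (insert q A)
  then obtain K where K: "K > 0" "\<forall>r\<in>A. of_int K * r \<in> \<int>" by blast
  obtain n d where nd: "quotient_of q = (n, d)" by (cases "quotient_of q")
  have d: "d > 0" using nd by (rule quotient_of_denom_pos)
  have qe: "q = of_int n / of_int d" using nd by (rule quotient_of_div)
  show ?case
  proof (intro exI[of _ "K * d"] conjI ballI)
    show "K * d > 0" using K d by simp
    fix r assume "r \<in> insert q A"
    then show "of_int (K * d) * r \<in> \<int>"
    proof
      assume "r = q"
      then have "of_int (K * d) * r = of_int (K * n)" using d qe by simp
      then show ?thesis by (metis Ints_of_int)
    next
      assume "r \<in> A"
      then have "of_int K * r \<in> \<int>" using K by blast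
      then have "of_int d * (of_int K * r) \<in> \<int>" by simp
      then show ?thesis by (simp add: mult_ac)
    qed
  qed
qed

lemma scale_to_int: "\<exists>K::int. K > 0 \<and> (\<exists>z. iv z = of_int K *s (x::rat^'n))"
proof -
  obtain K :: int where K: "K > 0" "\<forall>q\<in>range (\<lambda>i. x $ i). of_int K * q \<in> \<int>"
    using common_denom[of "range (\<lambda>i. x $ i)"] by auto
  have "\<forall>i. \<exists>z. of_int K * x $ i = of_int z" using K(2) by (auto elim!: Ints_cases)
  then obtain f where f: "\<And>i. of_int K * x $ i = of_int (f i)" by metis
  show ?thesis
    by (intro exI[of _ K] conjI K(1) exI[of _ "\<chi> i. f i"]) (simp add: vec_eq_iff f)
qed

lemma prim_div: assumes "primitive \<rho>" "\<forall>i. k dvd \<rho> $ i" shows "\<bar>k\<bar> = 1"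
proof -
  have "\<rho> = k *s (\<chi> i. \<rho> $ i div k)" using assms(2) by (simp add: vec_eq_iff)
  then show ?thesis using assms(1) unfolding primitive_def by blast
qed

lemma primitive_decomp:
  assumes "(x::rat^'n) \<noteq> 0" shows "\<exists>\<rho> t. primitive \<rho> \<and> t > 0 \<and> x = t *s iv \<rho>"
proof -
  obtain K :: int and z where K: "K > 0" "iv z = of_int K *s x" using scale_to_int by blast
  have znz: "z \<noteq> 0" using K assms by (metis iv_eq0 of_int_0_less_iff order_less_irrefl vector_mul_eq_0)
  define d where "d = Gcd (range (\<lambda>i. z $ i))"
  have dd: "d dvd z $ i" for i unfolding d_def by (rule Gcd_dvd) auto
  have "d \<noteq> 0" using znz unfolding d_def by (auto simp: vec_eq_iff)
  moreover have "d \<ge> 0" unfolding d_def by simp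
  ultimately have dpos: "d > 0" by simp
  define \<rho> where "\<rho> = (\<chi> i. z $ i div d)"
  have z\<rho>: "z = d *s \<rho>" unfolding \<rho>_def using dd by (simp add: vec_eq_iff)
  have prim: "primitive \<rho>"
    unfolding primitive_def
  proof (intro conjI allI impI)
    show "\<rho> \<noteq> 0" using znz z\<rho> by auto
    fix k :: int and w assume kw: "\<rho> = k *s w"
    have "k * d dvd z $ i" for i using z\<rho> kw by (simp add: mult.commute[of k d])
    then have "k * d dvd d" unfolding d_def by (intro Gcd_greatest) auto
    then have "k * d dvd 1 * d" by simp
    then have "k dvd 1" using dpos by (subst (asm) dvd_mult_cancel_right) auto
    then show "\<bar>k\<bar> = 1" by simp
  qed
  have "x = (of_int d / of_int K) *s iv \<rho>"
  proof -
    have "of_int K *s x = of_int K *s ((of_int d / of_int K) *s iv \<rho>)"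
      using K(2) z\<rho> K(1) by (simp add: iv_smult vector_smult_assoc)
    then show ?thesis using K(1) by simp
  qed
  then show ?thesis using prim dpos K(1) by (intro exI[of _ \<rho>] exI[of _ "of_int d / of_int K"]) auto
qed

lemma prim_unique:
  assumes p1: "primitive \<rho>" and p2: "primitive \<rho>'" and t: "t > 0" and eq: "iv \<rho> = t *s iv \<rho>'"
  shows "\<rho> = \<rho>'"
proof -
  obtain p q where pq: "quotient_of t = (p, q)" by (cases "quotient_of t")
  have q: "q > 0" using pq by (rule quotient_of_denom_pos)
  have cop: "coprime p q" using pq by (rule quotient_of_coprime)
  have te: "t = of_int p / of_int q" using pq by (rule quotient_of_div)
  have p: "p > 0" using t te q by (simp add: zero_less_divide_iff)
  have ci: "q * \<rho> $ i = p * \<rho>' $ i" for i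
  proof -
    have "of_int (\<rho> $ i) = t * of_int (\<rho>' $ i)" using eq by (metis iv_comp vector_smult_component)
    then have "of_int q * of_int (\<rho> $ i) = of_int p * (of_int (\<rho>' $ i) :: rat)" using te q by (simp add: field_simps)
    then show ?thesis by (metis of_int_eq_iff of_int_mult)
  qed
  have "p dvd \<rho> $ i" for i
  proof -
    have "p dvd q * \<rho> $ i" using ci by simp
    then show ?thesis using cop by (simp add: coprime_dvd_mult_right_iff)
  qed
  then have p1': "p = 1" using prim_div[OF p1] p by force
  have "q dvd \<rho>' $ i" for i
  proof -
    have "q dvd p * \<rho>' $ i" using ci[of i] by (metis dvd_triv_left)
    then show ?thesis using cop by (simp add: coprime_dvd_mult_right_iff coprime_commute)
  qed
  then have "q = 1" using prim_div[OF p2] q by force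
  then show ?thesis using ci p1' by (simp add: vec_eq_iff)
qed

lemma dlp_iff:
  assumes "\<sigma> = qcone G" "finite G"
  shows "m \<in> dual_lattice_points \<sigma> \<longleftrightarrow> (\<forall>g\<in>G. pair_QQ (iv m) g \<ge> 0)"
proof
  assume "m \<in> dual_lattice_points \<sigma>"
  then show "\<forall>g\<in>G. pair_QQ (iv m) g \<ge> 0"
    using assms qcone_mem unfolding dual_lattice_points_def pMNQ by blast
next
  assume "\<forall>g\<in>G. pair_QQ (iv m) g \<ge> 0"
  then show "m \<in> dual_lattice_points \<sigma>"
    using assms qcone_dual unfolding dual_lattice_points_def pMNQ by blast
qed

lemma dlp_add: "a \<in> dual_lattice_points \<sigma> \<Longrightarrow> b \<in> dual_lattice_points \<sigma> \<Longrightarrow> a + b \<in> dual_lattice_points \<sigma>"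
  unfolding dual_lattice_points_def pMNQ by (auto simp: iv_add PQ_add_l)

lemma dlp_zero: "0 \<in> dual_lattice_points \<sigma>"
  unfolding dual_lattice_points_def pMNQ by simp

lemma dlp_smult: "a \<in> dual_lattice_points \<sigma> \<Longrightarrow> k \<ge> 0 \<Longrightarrow> k *s a \<in> dual_lattice_points \<sigma>"
  unfolding dual_lattice_points_def pMNQ by (auto simp: iv_smult PQ_smult_l)


lemma nat_bound: assumes "finite (A :: rat set)" shows "\<exists>L::nat. \<forall>x\<in>A. x \<le> of_nat L"
  using assms
proof (induction A rule: finite_induct)
  case empty then show ?case by simp
next
  case (insert a A)
  then obtain L where L: "\<forall>x\<in>A. x \<le> of_nat L" by blast
  obtain L' :: nat where L': "a \<le> of_nat L'" using real_arch_simple by blast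
  show ?case
    by (intro exI[of _ "max L L'"]) (use L L' in \<open>auto simp: of_nat_max intro: order_trans\<close>)
qed

locale gcone =
  fixes G :: "(rat^'n) set" and \<sigma> :: "(rat^'n) set"
  assumes finG: "finite G" and \<sigma>G: "\<sigma> = qcone G" and sc: "strongly_convex \<sigma>"
    and minG: "\<forall>g\<in>G. g \<notin> qcone (G - {g})"
begin

abbreviation S where "S \<equiv> dual_lattice_points \<sigma>"

lemma G_sub: "g \<in> G \<Longrightarrow> g \<in> \<sigma>" using finG \<sigma>G qcone_mem by auto

lemma zero_notin: "0 \<notin> G" using minG qcone_0 by metis

lemma S_iff: "m \<in> S \<longleftrightarrow> (\<forall>g\<in>G. pair_QQ (iv m) g \<ge> 0)"
  using dlp_iff[OF \<sigma>G finG] .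

lemma S_pair: "m \<in> S \<Longrightarrow> u \<in> \<sigma> \<Longrightarrow> pair_QQ (iv m) u \<ge> 0"
  unfolding dual_lattice_points_def pMNQ by blast

lemma ray_of_gen:
  assumes g: "g \<in> G"
  shows "\<exists>\<rho> t m. is_ray \<sigma> \<rho> \<and> t > 0 \<and> g = t *s iv \<rho> \<and>
     (\<forall>x\<in>G. pair_QQ m x \<ge> 0) \<and> pair_QQ m g = 0 \<and> (\<forall>h\<in>G - {g}. pair_QQ m h > 0)"
proof -
  have gnz: "g \<noteq> 0" using g zero_notin by auto
  obtain \<rho> t where \<rho>: "primitive \<rho>" "t > 0" "g = t *s iv \<rho>" using primitive_decomp[OF gnz] by blast
  obtain m where m: "\<forall>x\<in>G. pair_QQ m x \<ge> 0" "pair_QQ m g = 0" "\<forall>h\<in>G - {g}. pair_QQ m h > 0"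
    using exposing[OF finG sc[unfolded \<sigma>G] minG g] by blast
  have "is_ray \<sigma> \<rho>" unfolding is_ray_def
  proof (intro conjI bexI[of _ m])
    show "primitive \<rho>" by fact
    show "m \<in> dual_cone \<sigma>" unfolding dual_cone_def \<sigma>G using m(1) qcone_dual by blast
    show "\<sigma> \<inter> {u. pair_QQ m u = 0} = {s *s iv \<rho> |s. s \<ge> 0}"
    proof
      show "\<sigma> \<inter> {u. pair_QQ m u = 0} \<subseteq> {s *s iv \<rho> |s. s \<ge> 0}"
      proof
        fix u assume u: "u \<in> \<sigma> \<inter> {u. pair_QQ m u = 0}"
        then obtain c where c: "\<forall>x\<in>G. c x \<ge> 0" "u = (\<Sum>x\<in>G. c x *s x)" unfolding \<sigma>G by (blast elim: qconeE)
        have "(\<Sum>x\<in>G. c x * pair_QQ m x) = 0" using u c(2) by (simp add: PQ_simps)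
        moreover have "(\<Sum>x\<in>G. c x * pair_QQ m x) = 0 \<longleftrightarrow> (\<forall>x\<in>G. c x * pair_QQ m x = 0)"
          by (rule sum_nonneg_eq_0_iff[OF finG]) (use c(1) m(1) in simp)
        ultimately have z: "\<forall>x\<in>G. c x * pair_QQ m x = 0" by blast
        have cx: "c x = 0" if "x \<in> G" "x \<noteq> g" for x
        proof -
          have "pair_QQ m x > 0" using m(3) that by blast
          moreover have "c x * pair_QQ m x = 0" using z that by blast
          ultimately show ?thesis by simp
        qed
        have "u = c g *s g + (\<Sum>x\<in>G - {g}. c x *s x)" using c(2) g finG by (simp add: sum.remove)
        also have "(\<Sum>x\<in>G - {g}. c x *s x) = 0" using cx by (intro sum.neutral) auto
        finally have "u = (c g * t) *s iv \<rho>" using \<rho>(3) by (simp add: vector_smult_assoc)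
        then show "u \<in> {s *s iv \<rho> |s. s \<ge> 0}" using c(1) g \<rho>(2) by auto
      qed
    next
      show "{s *s iv \<rho> |s. s \<ge> 0} \<subseteq> \<sigma> \<inter> {u. pair_QQ m u = 0}"
      proof
        fix u assume "u \<in> {s *s iv \<rho> |s. s \<ge> 0}"
        then obtain s where s: "s \<ge> 0" "u = s *s iv \<rho>" by blast
        have "u = (s / t) *s g" using s \<rho> by (simp add: vector_smult_assoc)
        moreover have "(s / t) *s g \<in> \<sigma>" using G_sub[OF g] s(1) \<rho>(2) \<sigma>G by (simp add: qcone_smult)
        ultimately show "u \<in> \<sigma> \<inter> {u. pair_QQ m u = 0}" using m(2) by (simp add: PQ_smult_r)
      qed
    qed
  qed
  then show ?thesis using \<rho> m by blast
qed

lemma ray_in: assumes "is_ray \<sigma> \<rho>" shows "iv \<rho> \<in> \<sigma>"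
proof -
  obtain m where "\<sigma> \<inter> {u. pair_QQ m u = 0} = {t *s iv \<rho> |t. 0 \<le> t}"
    using assms unfolding is_ray_def by blast
  moreover have "1 *s iv \<rho> \<in> {t *s iv \<rho> |t. 0 \<le> t}" by (rule CollectI, rule exI[of _ 1]) simp
  ultimately show ?thesis by auto
qed

lemma ray_nonneg: "m \<in> S \<Longrightarrow> is_ray \<sigma> \<rho> \<Longrightarrow> pair_MN m \<rho> \<ge> 0"
  using S_pair[OF _ ray_in] by (metis pMN of_int_0_le_iff)

lemma conv_mem:
  assumes dr: "demazure_root \<sigma> e \<rho>" and m: "m \<in> S" and i: "0 \<le> i" "i \<le> pair_MN m \<rho>"
  shows "m + i *s e \<in> S"
  unfolding S_iff
proof
  fix g assume g: "g \<in> G"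
  obtain \<rho>' t where r: "is_ray \<sigma> \<rho>'" "t > 0" "g = t *s iv \<rho>'" using ray_of_gen[OF g] by blast
  have "pair_MN (m + i *s e) \<rho>' \<ge> 0"
  proof (cases "\<rho>' = \<rho>")
    case True
    then show ?thesis using dr i unfolding demazure_root_def by (simp add: pMN_add_l pMN_smult_l)
  next
    case False
    then have "pair_MN e \<rho>' \<ge> 0" using dr r(1) unfolding demazure_root_def by blast
    moreover have "pair_MN m \<rho>' \<ge> 0" using ray_nonneg[OF m r(1)] .
    ultimately show ?thesis using i by (simp add: pMN_add_l pMN_smult_l)
  qed
  then have "pair_QQ (iv (m + i *s e)) (iv \<rho>') \<ge> 0" by (metis pMN of_int_0_le_iff)
  then show "pair_QQ (iv (m + i *s e)) g \<ge> 0" using r by (simp add: PQ_smult_r)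
qed

lemma exists_m1:
  assumes dr: "demazure_root \<sigma> e \<rho>"
  shows "\<exists>m1\<in>S. pair_MN m1 \<rho> = 1"
proof -
  have ray: "is_ray \<sigma> \<rho>" using dr unfolding demazure_root_def by blast
  then obtain m' where m': "m' \<in> dual_cone \<sigma>" "\<sigma> \<inter> {u. pair_QQ m' u = 0} = {s *s iv \<rho> |s. s \<ge> 0}"
    unfolding is_ray_def by blast
  obtain K :: int and z where K: "K > 0" "iv z = of_int K *s m'" using scale_to_int by blast
  have zg: "pair_QQ (iv z) u = of_int K * pair_QQ m' u" for u using K(2) by (simp add: PQ_smult_l)
  have m'n: "pair_QQ m' u \<ge> 0" if "u \<in> \<sigma>" for u using m'(1) that unfolding dual_cone_def by blast
  have z\<rho>: "pair_QQ m' (iv \<rho>) = 0"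
  proof -
    have "1 *s iv \<rho> \<in> {t *s iv \<rho> |t. 0 \<le> t}" by (rule CollectI, rule exI[of _ 1]) simp
    then show ?thesis using m'(2) by auto
  qed
  obtain L :: nat where L: "\<forall>x\<in>(\<lambda>g. pair_QQ (iv e) g / pair_QQ (iv z) g) ` G. x \<le> of_nat L"
    using nat_bound[of "(\<lambda>g. pair_QQ (iv e) g / pair_QQ (iv z) g) ` G"] finG by blast
  define m1 where "m1 = int L *s z - e"
  have "m1 \<in> S" unfolding S_iff
  proof
    fix g assume g: "g \<in> G"
    have pm: "pair_QQ (iv m1) g = of_nat L * pair_QQ (iv z) g - pair_QQ (iv e) g"
      unfolding m1_def by (simp add: iv_diff iv_smult PQ_simps)
    show "pair_QQ (iv m1) g \<ge> 0"
    proof (cases "pair_QQ m' g = 0")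
      case True
      then have "g \<in> {s *s iv \<rho> |s. s \<ge> 0}" using m'(2) G_sub[OF g] by blast
      then obtain s where s: "s \<ge> 0" "g = s *s iv \<rho>" by blast
      have "pair_QQ (iv z) g = s * pair_QQ (iv z) (iv \<rho>)" "pair_QQ (iv e) g = s * pair_QQ (iv e) (iv \<rho>)"
        using s(2) by (simp_all add: PQ_smult_r)
      then have "pair_QQ (iv m1) g = s * (of_nat L * pair_QQ (iv z) (iv \<rho>) - pair_QQ (iv e) (iv \<rho>))"
        unfolding pm by (simp add: algebra_simps)
      also have "\<dots> = s"
      proof -
        have zr: "pair_QQ (iv z) (iv \<rho>) = 0" using zg z\<rho> by simp
        have er: "pair_QQ (iv e) (iv \<rho>) = -1" using dr pMN[of e \<rho>] unfolding demazure_root_def by simp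
        show ?thesis by (simp add: zr er)
      qed
      finally show ?thesis using s by simp
    next
      case False
      then have pos: "pair_QQ (iv z) g > 0" using zg m'n[OF G_sub[OF g]] K(1) by simp
      have "pair_QQ (iv e) g / pair_QQ (iv z) g \<le> of_nat L" using L g by blast
      then have "pair_QQ (iv e) g \<le> of_nat L * pair_QQ (iv z) g" using pos by (simp add: divide_le_eq)
      then show ?thesis using pm by simp
    qed
  qed
  moreover have "pair_MN m1 \<rho> = 1"
  proof -
    have zr0: "pair_MN z \<rho> = 0" using pMN[of z \<rho>] zg z\<rho> by simp
    have "pair_MN m1 \<rho> = int L * pair_MN z \<rho> - pair_MN e \<rho>"
      unfolding m1_def pair_MN_def by (simp add: sum_subtractf sum_distrib_left algebra_simps)
    then show ?thesis using zr0 dr unfolding demazure_root_def by simp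
  qed
  ultimately show ?thesis by blast
qed

end


context gcone begin

lemma scale_S:
  assumes "\<forall>g\<in>G. pair_QQ m g \<ge> 0"
  shows "\<exists>K::int. K > 0 \<and> (\<exists>w. iv w = of_int K *s m \<and> w \<in> S)"
proof -
  obtain K :: int and w where K: "K > 0" "iv w = of_int K *s m" using scale_to_int by blast
  have "w \<in> S" unfolding S_iff using K assms by (simp add: PQ_smult_l)
  then show ?thesis using K by blast
qed

lemma forward_geo:
  fixes N :: "int^'n \<Rightarrow> nat" and e :: "int^'n"
  assumes N1: "\<And>a b. a \<in> S \<Longrightarrow> b \<in> S \<Longrightarrow> N (a + b) = N a + N b"
    and N2: "\<And>a. a \<in> S \<Longrightarrow> a + int (N a) *s e \<in> S \<and> N (a + int (N a) *s e) = 0"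
    and N3: "a0 \<in> S" "N a0 > 0"
  shows "\<exists>\<rho>. demazure_root \<sigma> e \<rho> \<and> (\<forall>a\<in>S. int (N a) = pair_MN a \<rho>)"
proof -
  obtain ms where ms: "\<forall>g\<in>G. pair_QQ ms g > 0"
    using interior_functional[OF finG sc[unfolded \<sigma>G] zero_notin] by blast
  then obtain Ks :: int and zs where Ks: "Ks > 0" "iv zs = of_int Ks *s ms" "zs \<in> S"
    using scale_S[of ms] by (auto simp: less_imp_le)
  have zsp: "pair_QQ (iv zs) g > 0" if "g \<in> G" for g using Ks ms that by (simp add: PQ_smult_l)
  have exK: "\<exists>K::nat. x + int K *s zs \<in> S" for x
  proof -
    obtain L :: nat where L: "\<forall>y\<in>(\<lambda>g. - pair_QQ (iv x) g / pair_QQ (iv zs) g) ` G. y \<le> of_nat L"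
      using nat_bound finG by blast
    have "x + int L *s zs \<in> S" unfolding S_iff
    proof
      fix g assume g: "g \<in> G"
      have "(- pair_QQ (iv x) g) / pair_QQ (iv zs) g \<le> of_nat L" using L g by blast
      then have "- pair_QQ (iv x) g \<le> of_nat L * pair_QQ (iv zs) g"
        by (subst (asm) pos_divide_le_eq[OF zsp[OF g]]) (simp add: mult.commute)
      then show "pair_QQ (iv (x + int L *s zs)) g \<ge> 0" by (simp add: iv_add iv_smult PQ_simps)
    qed
    then show ?thesis by blast
  qed
  have Nsm: "N (int k *s a) = k * N a" if "a \<in> S" for k a
  proof (induction k)
    case 0 then show ?case using N1[OF dlp_zero dlp_zero] by simp
  next
    case (Suc k)
    have "int (Suc k) *s a = a + int k *s a" by (simp add: vector_sadd_rdistrib)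
    then show ?case using N1[OF that dlp_smult[OF that]] Suc by simp
  qed
  define Kx where "Kx x = (SOME K::nat. x + int K *s zs \<in> S)" for x
  have Kx: "x + int (Kx x) *s zs \<in> S" for x unfolding Kx_def using exK by (rule someI_ex)
  define Nt where "Nt x = int (N (x + int (Kx x) *s zs)) - int (Kx x) * int (N zs)" for x
  have wd: "Nt x = int (N (x + int K *s zs)) - int K * int (N zs)" if "x + int K *s zs \<in> S" for x K
  proof -
    have e1: "(x + int K *s zs) + int (Kx x) *s zs = (x + int (Kx x) *s zs) + int K *s zs"
      by (simp add: algebra_simps)
    have "N ((x + int K *s zs) + int (Kx x) *s zs) = N (x + int K *s zs) + Kx x * N zs"
      using N1[OF that dlp_smult[OF Ks(3)]] Nsm[OF Ks(3)] by simp
    moreover have "N ((x + int (Kx x) *s zs) + int K *s zs) = N (x + int (Kx x) *s zs) + K * N zs"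
      using N1[OF Kx dlp_smult[OF Ks(3)]] Nsm[OF Ks(3)] by simp
    ultimately have "N (x + int (Kx x) *s zs) + K * N zs = N (x + int K *s zs) + Kx x * N zs"
      using e1 by simp
    then have "int (N (x + int (Kx x) *s zs)) + int K * int (N zs) = int (N (x + int K *s zs)) + int (Kx x) * int (N zs)"
      by (metis of_nat_add of_nat_mult)
    then show ?thesis unfolding Nt_def by linarith
  qed
  have NtS: "Nt a = int (N a)" if "a \<in> S" for a using wd[of a 0] that by simp
  have Ntadd: "Nt (x + y) = Nt x + Nt y" for x y
  proof -
    have e1: "(x + y) + int (Kx x + Kx y) *s zs = (x + int (Kx x) *s zs) + (y + int (Kx y) *s zs)"
      by (simp add: algebra_simps vector_sadd_rdistrib)
    have "(x + y) + int (Kx x + Kx y) *s zs \<in> S" unfolding e1 by (rule dlp_add[OF Kx Kx])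
    then have "Nt (x + y) = int (N ((x + y) + int (Kx x + Kx y) *s zs)) - int (Kx x + Kx y) * int (N zs)"
      by (rule wd)
    also have "\<dots> = Nt x + Nt y" unfolding e1 N1[OF Kx Kx] Nt_def by (simp add: algebra_simps)
    finally show ?thesis .
  qed
  have Nt0: "Nt 0 = 0" using Ntadd[of 0 0] by simp
  have Ntneg: "Nt (- x) = - Nt x" for x using Ntadd[of x "- x"] Nt0 by simp
  have Ntnat: "Nt (int k *s x) = int k * Nt x" for k x
  proof (induction k)
    case 0 then show ?case using Nt0 by simp
  next
    case (Suc k)
    have "int (Suc k) *s x = x + int k *s x" by (simp add: vector_sadd_rdistrib)
    then show ?case using Ntadd Suc by (simp add: algebra_simps)
  qed
  have Ntint: "Nt (k *s x) = k * Nt x" for k x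
  proof (cases "k \<ge> 0")
    case True then show ?thesis using Ntnat[of "nat k" x] by simp
  next
    case False
    have "k *s x = - (int (nat (- k)) *s x)" using False by (simp add: vec_eq_iff)
    then show ?thesis using Ntneg Ntnat[of "nat (-k)" x] False by simp
  qed
  have Ntsum: "Nt (\<Sum>i\<in>A. f i) = (\<Sum>i\<in>A. Nt (f i))" if "finite A" for A and f :: "'n \<Rightarrow> int^'n"
    using that by (induction A rule: finite_induct) (auto simp: Nt0 Ntadd)
  define bv :: "'n \<Rightarrow> int^'n" where "bv i = (\<chi> j. if j = i then 1 else 0)" for i
  define v where "v = (\<chi> i. Nt (bv i))"
  have Ntlin: "Nt x = pair_MN x v" for x
  proof -
    have "x = (\<Sum>i\<in>UNIV. (x $ i) *s bv i)" unfolding bv_def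
      by (simp add: vec_eq_iff if_distrib[where f="\<lambda>c. _ * c"] cong: if_cong)
    then have "Nt x = (\<Sum>i\<in>UNIV. Nt ((x $ i) *s bv i))" using Ntsum by (metis finite_class.finite_UNIV)
    also have "\<dots> = pair_MN x v" unfolding pair_MN_def v_def by (simp add: Ntint)
    finally show ?thesis .
  qed
  have Nv: "int (N a) = pair_MN a v" if "a \<in> S" for a using NtS[OF that] Ntlin by simp
  have ev: "pair_MN e v = -1"
  proof -
    have "0 = int (N (a0 + int (N a0) *s e))" using N2[OF N3(1)] by simp
    also have "\<dots> = pair_MN a0 v + int (N a0) * pair_MN e v"
      using Nv[of "a0 + int (N a0) *s e"] N2[OF N3(1)] by (simp add: pMN_add_l pMN_smult_l)
    also have "\<dots> = int (N a0) * (1 + pair_MN e v)" using Nv[OF N3(1)] by (simp add: algebra_simps)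
    finally show ?thesis using N3(2) by simp
  qed
  have v\<sigma>: "iv v \<in> \<sigma>"
  proof (rule ccontr)
    assume "iv v \<notin> \<sigma>"
    then obtain y where y: "\<forall>g\<in>G. pair_QQ y g \<ge> 0" "pair_QQ y (iv v) < 0"
      using farkas_set[OF finG] \<sigma>G by blast
    obtain K :: int and w where w: "K > 0" "iv w = of_int K *s y" "w \<in> S" using scale_S[OF y(1)] by blast
    have "of_int (pair_MN w v) = of_int K * pair_QQ y (iv v)" using w(2) by (simp add: pMN PQ_smult_l)
    also have "\<dots> < 0" using w(1) y(2) by (simp add: mult_pos_neg)
    finally have "pair_MN w v < 0" by simp
    then show False using Nv[OF w(3)] by linarith
  qed
  then obtain c where c: "\<forall>g\<in>G. c g \<ge> 0" "iv v = (\<Sum>g\<in>G. c g *s g)" unfolding \<sigma>G by (rule qconeE)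
  have sumc: "(\<Sum>g\<in>G. c g * pair_QQ (iv e) g) = -1"
  proof -
    have "pair_QQ (iv e) (iv v) = -1" using ev pMN[of e v] by simp
    then show ?thesis unfolding c(2) by (simp add: PQ_simps)
  qed
  obtain g0 where g0: "g0 \<in> G" "c g0 > 0" "pair_QQ (iv e) g0 < 0"
  proof (rule ccontr)
    assume "\<not> thesis"
    have "\<forall>g\<in>G. c g * pair_QQ (iv e) g \<ge> 0"
    proof
      fix g assume g: "g \<in> G"
      show "c g * pair_QQ (iv e) g \<ge> 0"
      proof (cases "c g > 0")
        case True
        have "\<not> pair_QQ (iv e) g < 0" using that[OF g True] \<open>\<not> thesis\<close> by blast
        then show ?thesis using True by simp
      next
        case False
        then have "c g = 0" using c(1) g by force
        then show ?thesis by simp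
      qed
    qed
    then have "(\<Sum>g\<in>G. c g * pair_QQ (iv e) g) \<ge> 0" by (simp add: sum_nonneg)
    then show False using sumc by simp
  qed
  obtain \<rho>0 t m where r0: "is_ray \<sigma> \<rho>0" "t > 0" "g0 = t *s iv \<rho>0"
    "\<forall>x\<in>G. pair_QQ m x \<ge> 0" "pair_QQ m g0 = 0" "\<forall>h\<in>G - {g0}. pair_QQ m h > 0"
    using ray_of_gen[OF g0(1)] by blast
  have ch: "c h = 0" if h: "h \<in> G - {g0}" for h
  proof (rule ccontr)
    assume "c h \<noteq> 0"
    then have chp: "c h > 0" using c(1) h by (simp add: less_le)
    have "c h * pair_QQ m h \<le> (\<Sum>x\<in>G. c x * pair_QQ m x)"
      by (rule member_le_sum) (use h finG c(1) r0(4) in auto)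
    moreover have "c h * pair_QQ m h > 0" using chp r0(6) h by simp
    ultimately have mv: "pair_QQ m (iv v) > 0" unfolding c(2) by (simp add: PQ_simps)
    obtain K :: int and w where w: "K > 0" "iv w = of_int K *s m" "w \<in> S" using scale_S[OF r0(4)] by blast
    have "of_int (int (N w)) = pair_QQ (iv w) (iv v)" using Nv[OF w(3)] pMN[of w v] by simp
    also have "\<dots> = of_int K * pair_QQ m (iv v)" using w(2) by (simp add: PQ_smult_l)
    finally have Nwq: "(of_nat (N w) :: rat) = of_int K * pair_QQ m (iv v)" by simp
    then have Nwp: "N w > 0" using w(1) mv by (metis of_int_pos of_nat_0_less_iff zero_less_mult_iff)
    have "pair_QQ (iv (w + int (N w) *s e)) g0 \<ge> 0" using N2[OF w(3)] g0(1) unfolding S_iff by blast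
    moreover have "pair_QQ (iv (w + int (N w) *s e)) g0 = of_int K * pair_QQ m g0 + of_nat (N w) * pair_QQ (iv e) g0"
      using w(2) by (simp add: iv_add iv_smult PQ_simps)
    moreover have "of_nat (N w) * pair_QQ (iv e) g0 < 0" using Nwp g0(3) by (simp add: mult_pos_neg)
    ultimately show False using r0(5) by simp
  qed
  have "iv v = c g0 *s g0 + (\<Sum>x\<in>G - {g0}. c x *s x)" using c(2) g0(1) finG by (simp add: sum.remove)
  also have "(\<Sum>x\<in>G - {g0}. c x *s x) = 0" using ch by (intro sum.neutral) auto
  finally have vr: "iv v = (c g0 * t) *s iv \<rho>0" using r0(3) by (simp add: vector_smult_assoc)
  define r where "r = c g0 * t"
  have rp: "r > 0" unfolding r_def using g0(2) r0(2) by simp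
  define j where "j = pair_MN e \<rho>0"
  have "(-1::rat) = pair_QQ (iv e) (iv v)" using ev pMN[of e v] by simp
  also have "\<dots> = r * of_int j" unfolding vr j_def r_def by (simp add: PQ_smult_r pMN)
  finally have rj: "r * of_int j = -1" by simp
  have jneg: "j < 0"
  proof (rule ccontr)
    assume "\<not> j < 0"
    then have "(of_int j :: rat) \<ge> 0" by simp
    then have "r * of_int j \<ge> 0" using rp by simp
    then show False using rj by simp
  qed
  have vr': "iv v = r *s iv \<rho>0" using vr r_def by simp
  have "iv \<rho>0 = (1 / r) *s iv v" unfolding vr' using rp by (simp add: vector_smult_assoc)
  also have "1 / r = of_int (- j)" using rj rp by (simp add: field_simps)
  finally have "iv \<rho>0 = iv ((- j) *s v)" by (simp add: iv_smult)
  then have \<rho>0v: "\<rho>0 = (- j) *s v" by (simp add: iv_inj)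
  have "\<bar>- j\<bar> = 1" using r0(1) \<rho>0v unfolding is_ray_def primitive_def by blast
  then have "j = -1" using jneg by simp
  then have \<rho>0eq: "\<rho>0 = v" using \<rho>0v by simp
  have dr: "demazure_root \<sigma> e v" unfolding demazure_root_def
  proof (intro conjI allI impI)
    show "is_ray \<sigma> v" using r0(1) \<rho>0eq by simp
    show "pair_MN e v = -1" by (rule ev)
    fix \<rho>' assume \<rho>': "is_ray \<sigma> \<rho>' \<and> \<rho>' \<noteq> v"
    obtain m' where m': "m' \<in> dual_cone \<sigma>" "\<sigma> \<inter> {u. pair_QQ m' u = 0} = {s *s iv \<rho>' |s. s \<ge> 0}"
      using \<rho>' unfolding is_ray_def by blast
    have m'n: "pair_QQ m' u \<ge> 0" if "u \<in> \<sigma>" for u using m'(1) that unfolding dual_cone_def by blast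
    have "pair_QQ m' (iv v) \<noteq> 0"
    proof
      assume "pair_QQ m' (iv v) = 0"
      then have "iv v \<in> {s *s iv \<rho>' |s. s \<ge> 0}" using m'(2) v\<sigma> by blast
      then obtain s where s: "s \<ge> 0" "iv v = s *s iv \<rho>'" by blast
      have pv: "primitive v" using r0(1) \<rho>0eq unfolding is_ray_def by blast
      have pr: "primitive \<rho>'" using \<rho>' unfolding is_ray_def by blast
      have "v \<noteq> 0" using pv unfolding primitive_def by blast
      then have "s \<noteq> 0" using s(2) by auto
      then have "s > 0" using s(1) by simp
      then have "v = \<rho>'" using prim_unique[OF pv pr _ s(2)] by blast
      then show False using \<rho>' by simp
    qed
    then have mvp: "pair_QQ m' (iv v) > 0" using m'n[OF v\<sigma>] by simp
    have "\<forall>g\<in>G. pair_QQ m' g \<ge> 0" using m'n G_sub by blast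
    then obtain K :: int and w where w: "K > 0" "iv w = of_int K *s m'" "w \<in> S" using scale_S by blast
    have "(of_nat (N w) :: rat) = of_int (pair_MN w v)" using Nv[OF w(3)] by (metis of_int_of_nat_eq)
    also have "\<dots> = of_int K * pair_QQ m' (iv v)" using w(2) by (simp add: pMN PQ_smult_l)
    finally have Nwp: "N w > 0" using w(1) mvp by (metis of_int_pos of_nat_0_less_iff zero_less_mult_iff)
    have r\<sigma>: "iv \<rho>' \<in> \<sigma>" using ray_in \<rho>' by blast
    have m'r: "pair_QQ m' (iv \<rho>') = 0"
    proof -
      have "1 *s iv \<rho>' \<in> {s *s iv \<rho>' |s. s \<ge> 0}" by (rule CollectI, rule exI[of _ 1]) simp
      then show ?thesis using m'(2) by auto
    qed
    have "pair_QQ (iv (w + int (N w) *s e)) (iv \<rho>') \<ge> 0" using S_pair[OF conjunct1[OF N2[OF w(3)]] r\<sigma>] .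
    also have "pair_QQ (iv (w + int (N w) *s e)) (iv \<rho>') = of_nat (N w) * of_int (pair_MN e \<rho>')"
      using w(2) m'r by (simp add: iv_add iv_smult PQ_simps pMN)
    finally have "0 \<le> (of_nat (N w) :: rat) * of_int (pair_MN e \<rho>')" .
    then show "pair_MN e \<rho>' \<ge> 0" using Nwp by (simp add: zero_le_mult_iff)
  qed
  show ?thesis using dr Nv by blast
qed

end


lemma single_eq_keys: assumes "Poly_Mapping.keys f \<subseteq> {x}" shows "f = Poly_Mapping.single x (Poly_Mapping.lookup f x)"
proof (rule poly_mapping_eqI)
  fix y show "Poly_Mapping.lookup f y = Poly_Mapping.lookup (Poly_Mapping.single x (Poly_Mapping.lookup f x)) y"
    using assms by (cases "y = x") (auto simp: lookup_single in_keys_iff)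
qed

lemma scal_single: "scal c (Poly_Mapping.single x b) = Poly_Mapping.single x (c * b)"
  unfolding scal_def by (simp add: mult_single)

lemma chi_mult: "chi a * chi b = (chi (a + b) :: (int^'n \<Rightarrow>\<^sub>0 'k::field))"
  unfolding chi_def by (simp add: mult_single)

lemma chi_in: "m \<in> S \<Longrightarrow> (chi m :: (int^'n \<Rightarrow>\<^sub>0 'k::field)) \<in> semigroup_alg S"
  unfolding chi_def semigroup_alg_def by simp

lemma single_sum: "(\<Sum>j\<in>A. Poly_Mapping.single x (f j)) = Poly_Mapping.single x (\<Sum>j\<in>A. f j)"
  by (induction A rule: infinite_finite_induct) (auto simp: single_add)

lemma coeff_lin_pow: "coeff ([:1, l:] ^ n) i = l ^ i * of_nat (n choose i)"
  for l :: "'a::comm_ring_1"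
proof (induction n arbitrary: i)
  case 0 then show ?case by (cases i) auto
next
  case (Suc n)
  have eq: "[:1, l:] ^ Suc n = [:1, l:] ^ n + pCons 0 (smult l ([:1, l:] ^ n))"
    by (simp add: mult_pCons_left)
  show ?case
  proof (cases i)
    case 0 then show ?thesis unfolding eq using Suc by simp
  next
    case (Suc k)
    have "coeff ([:1, l:] ^ Suc n) i = l ^ Suc k * of_nat (n choose Suc k) + l * (l ^ k * of_nat (n choose k))"
      unfolding eq Suc using Suc.IH by simp
    also have "\<dots> = l ^ i * of_nat (Suc n choose i)" unfolding Suc by (simp add: algebra_simps)
    finally show ?thesis .
  qed
qed

lemma single_inj: "Poly_Mapping.single x c = Poly_Mapping.single x d \<Longrightarrow> c = d"
proof -
  assume "Poly_Mapping.single x c = Poly_Mapping.single x d"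
  then have "Poly_Mapping.lookup (Poly_Mapping.single x c) x = Poly_Mapping.lookup (Poly_Mapping.single x d) x" by simp
  then show ?thesis by simp
qed

lemma single_nz: "c \<noteq> 0 \<Longrightarrow> Poly_Mapping.single x c \<noteq> 0"
  using single_inj[of x c 0] by auto

lemma pm_expand: "f = (\<Sum>m\<in>Poly_Mapping.keys f. Poly_Mapping.single m (Poly_Mapping.lookup f m))"
proof (rule poly_mapping_eqI)
  fix k
  have "Poly_Mapping.lookup (\<Sum>m\<in>Poly_Mapping.keys f. Poly_Mapping.single m (Poly_Mapping.lookup f m)) k
      = (\<Sum>m\<in>Poly_Mapping.keys f. if m = k then Poly_Mapping.lookup f m else 0)"
    by (simp add: lookup_sum lookup_single when_def)
  also have "\<dots> = Poly_Mapping.lookup f k"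
    by (simp add: sum.delta' in_keys_iff)
  finally show "Poly_Mapping.lookup f k = Poly_Mapping.lookup (\<Sum>m\<in>Poly_Mapping.keys f. Poly_Mapping.single m (Poly_Mapping.lookup f m)) k" by simp
qed

locale hd_setup =
  fixes S :: "(int^'n) set" and D :: "nat \<Rightarrow> (int^'n \<Rightarrow>\<^sub>0 'k::field) \<Rightarrow> (int^'n \<Rightarrow>\<^sub>0 'k)" and e :: "int^'n"
  assumes S0: "0 \<in> S" and Sadd: "\<And>a b. a \<in> S \<Longrightarrow> b \<in> S \<Longrightarrow> a + b \<in> S"
    and LF: "LFIHD S D" and hom: "homogeneous_of_degree S D e"
begin


lemma LFc: "(\<forall>i. \<forall>f\<in>semigroup_alg S. D i f \<in> semigroup_alg S) \<and>
     (\<forall>i. \<forall>f\<in>semigroup_alg S. \<forall>g\<in>semigroup_alg S. D i (f + g) = D i f + D i g) \<and>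
     (\<forall>i c. \<forall>f\<in>semigroup_alg S. D i (scal c f) = scal c (D i f)) \<and>
     (\<forall>f\<in>semigroup_alg S. D 0 f = f) \<and>
     (\<forall>i. \<forall>f\<in>semigroup_alg S. \<forall>g\<in>semigroup_alg S.
         D i (f * g) = (\<Sum>j\<le>i. D j f * D (i - j) g)) \<and>
     (\<forall>f\<in>semigroup_alg S. finite {i. D i f \<noteq> 0}) \<and>
     (\<forall>i j. \<forall>f\<in>semigroup_alg S. D i (D j f) = scal (of_nat ((i + j) choose i)) (D (i + j) f))"
  using LF unfolding LFIHD_def .

lemma LF_mem: "f \<in> semigroup_alg S \<Longrightarrow> D i f \<in> semigroup_alg S"
  using conjunct1[OF LFc] by blast
lemma LF_add: "f \<in> semigroup_alg S \<Longrightarrow> g \<in> semigroup_alg S \<Longrightarrow> D i (f + g) = D i f + D i g"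
  using conjunct1[OF conjunct2[OF LFc]] by blast
lemma LF_scal: "f \<in> semigroup_alg S \<Longrightarrow> D i (scal c f) = scal c (D i f)"
  using conjunct1[OF conjunct2[OF conjunct2[OF LFc]]] by blast
lemma LF_0: "f \<in> semigroup_alg S \<Longrightarrow> D 0 f = f"
  using conjunct1[OF conjunct2[OF conjunct2[OF conjunct2[OF LFc]]]] by blast
lemma LF_leib: "f \<in> semigroup_alg S \<Longrightarrow> g \<in> semigroup_alg S \<Longrightarrow> D i (f * g) = (\<Sum>j\<le>i. D j f * D (i - j) g)"
  using conjunct1[OF conjunct2[OF conjunct2[OF conjunct2[OF conjunct2[OF LFc]]]]] by blast
lemma LF_fin: "f \<in> semigroup_alg S \<Longrightarrow> finite {i. D i f \<noteq> 0}"
  using conjunct1[OF conjunct2[OF conjunct2[OF conjunct2[OF conjunct2[OF conjunct2[OF LFc]]]]]] by blast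
lemma LF_iter: "f \<in> semigroup_alg S \<Longrightarrow> D i (D j f) = scal (of_nat ((i + j) choose i)) (D (i + j) f)"
  using conjunct2[OF conjunct2[OF conjunct2[OF conjunct2[OF conjunct2[OF conjunct2[OF LFc]]]]]] by blast

definition a :: "nat \<Rightarrow> int^'n \<Rightarrow> 'k" where
  "a i m = Poly_Mapping.lookup (D i (chi m)) (m + int i *s e)"

lemma Dchi: "m \<in> S \<Longrightarrow> D i (chi m) = Poly_Mapping.single (m + int i *s e) (a i m)"
  unfolding a_def using hom unfolding homogeneous_of_degree_def by (blast intro: single_eq_keys)

lemma D_add: "f \<in> semigroup_alg S \<Longrightarrow> g \<in> semigroup_alg S \<Longrightarrow> D i (f + g) = D i f + D i g"
  by (rule LF_add)

lemma zero_in: "0 \<in> semigroup_alg S" unfolding semigroup_alg_def by simp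

lemma D_zero: "D i 0 = 0"
  using D_add[OF zero_in zero_in, of i] by simp

lemma a0: assumes "m \<in> S" shows "a 0 m = 1"
proof -
  have "D 0 (chi m) = chi m" using LF_0[OF chi_in[OF assms]] .
  then show ?thesis by (simp add: a_def chi_def)
qed

lemma aS: "m \<in> S \<Longrightarrow> a i m \<noteq> 0 \<Longrightarrow> m + int i *s e \<in> S"
proof -
  assume m: "m \<in> S" and nz: "a i m \<noteq> 0"
  have "D i (chi m) \<in> semigroup_alg S" using LF_mem[OF chi_in[OF m]] .
  then have "Poly_Mapping.keys (D i (chi m)) \<subseteq> S" unfolding semigroup_alg_def by simp
  moreover have "Poly_Mapping.keys (D i (chi m)) = {m + int i *s e}" unfolding Dchi[OF m] using nz by simp
  ultimately show ?thesis by simp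
qed

lemma afin: "m \<in> S \<Longrightarrow> finite {i. a i m \<noteq> 0}"
proof -
  assume m: "m \<in> S"
  have "finite {i. D i (chi m) \<noteq> 0}" using LF_fin[OF chi_in[OF m]] .
  moreover have "{i. a i m \<noteq> 0} \<subseteq> {i. D i (chi m) \<noteq> 0}"
  proof
    fix i assume "i \<in> {i. a i m \<noteq> 0}"
    then show "i \<in> {i. D i (chi m) \<noteq> 0}" unfolding Dchi[OF m] using single_nz by simp
  qed
  ultimately show ?thesis by (rule finite_subset[rotated])
qed

lemma aL: assumes m: "m \<in> S" and m': "m' \<in> S"
  shows "a i (m + m') = (\<Sum>j\<le>i. a j m * a (i - j) m')"
proof -
  have "D i (chi m * chi m') = (\<Sum>j\<le>i. D j (chi m) * D (i - j) (chi m'))"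
    by (rule LF_leib[OF chi_in[OF m] chi_in[OF m']])
  also have "\<dots> = (\<Sum>j\<le>i. Poly_Mapping.single (m + m' + int i *s e) (a j m * a (i - j) m'))"
  proof (rule sum.cong[OF refl])
    fix j assume "j \<in> {..i}"
    then have X: "m + int j *s e + (m' + int (i - j) *s e) = m + m' + int i *s e"
      by (simp add: vec_eq_iff of_nat_diff algebra_simps)
    show "D j (chi m) * D (i - j) (chi m') = Poly_Mapping.single (m + m' + int i *s e) (a j m * a (i - j) m')"
      unfolding Dchi[OF m] Dchi[OF m'] mult_single X by (rule refl)
  qed
  also have "\<dots> = Poly_Mapping.single (m + m' + int i *s e) (\<Sum>j\<le>i. a j m * a (i - j) m')"
    by (rule single_sum)
  finally have "D i (chi (m + m')) = Poly_Mapping.single (m + m' + int i *s e) (\<Sum>j\<le>i. a j m * a (i - j) m')"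
    by (simp add: chi_mult)
  then have "Poly_Mapping.single (m + m' + int i *s e) (a i (m + m')) = Poly_Mapping.single (m + m' + int i *s e) (\<Sum>j\<le>i. a j m * a (i - j) m')"
    unfolding Dchi[OF Sadd[OF m m']] .
  then show ?thesis by (rule single_inj)
qed

lemma aI: assumes m: "m \<in> S" and nz: "a j m \<noteq> 0"
  shows "a j m * a i (m + int j *s e) = of_nat ((i + j) choose i) * a (i + j) m"
proof -
  have mj: "m + int j *s e \<in> S" using aS[OF m nz] .
  have "D i (D j (chi m)) = scal (of_nat ((i + j) choose i)) (D (i + j) (chi m))"
    by (rule LF_iter[OF chi_in[OF m]])
  moreover have "D j (chi m) = scal (a j m) (chi (m + int j *s e))"
    using Dchi[OF m] by (simp add: chi_def scal_single)
  moreover have "D i (scal (a j m) (chi (m + int j *s e))) = scal (a j m) (D i (chi (m + int j *s e)))"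
    by (rule LF_scal[OF chi_in[OF mj]])
  ultimately have eq: "scal (a j m) (D i (chi (m + int j *s e))) = scal (of_nat ((i + j) choose i)) (D (i + j) (chi m))"
    by simp
  define X where "X = m + int (i + j) *s e"
  have e2: "m + int j *s e + int i *s e = X"
    unfolding X_def by (simp add: vec_eq_iff algebra_simps)
  have L: "D i (chi (m + int j *s e)) = Poly_Mapping.single X (a i (m + int j *s e))"
    unfolding Dchi[OF mj] e2 by (rule refl)
  have R: "D (i + j) (chi m) = Poly_Mapping.single X (a (i + j) m)"
    unfolding Dchi[OF m] X_def by (rule refl)
  have "Poly_Mapping.single X (a j m * a i (m + int j *s e)) = Poly_Mapping.single X (of_nat ((i + j) choose i) * a (i + j) m)"
    using eq unfolding L R scal_single .
  then show ?thesis by (rule single_inj)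
qed

definition P :: "int^'n \<Rightarrow> 'k poly" where "P m = Abs_poly (\<lambda>i. a i m)"

lemma coeffP: "m \<in> S \<Longrightarrow> coeff (P m) i = a i m"
  unfolding P_def using afin
  by (subst Abs_poly_inverse) (auto simp: MOST_iff_cofinite)

lemma P_add: "m \<in> S \<Longrightarrow> m' \<in> S \<Longrightarrow> P (m + m') = P m * P m'"
  by (rule poly_eqI) (simp add: coeffP Sadd coeff_mult aL)

lemma P_nz: "m \<in> S \<Longrightarrow> P m \<noteq> 0"
  using coeffP[of m 0] a0 by (metis coeff_0 one_neq_zero)

definition N :: "int^'n \<Rightarrow> nat" where "N m = degree (P m)"

lemma N_add: "m \<in> S \<Longrightarrow> m' \<in> S \<Longrightarrow> N (m + m') = N m + N m'"
  unfolding N_def using P_add P_nz by (simp add: degree_mult_eq)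

lemma aN: assumes m: "m \<in> S" shows "a (N m) m \<noteq> 0"
proof -
  have "coeff (P m) (degree (P m)) \<noteq> 0" by (rule leading_coeff_neq_0[OF P_nz[OF m]])
  then show ?thesis using coeffP[OF m] unfolding N_def by simp
qed

lemma a_big: assumes m: "m \<in> S" and i: "N m < i" shows "a i m = 0"
  using coeff_eq_0[of "P m" i] i coeffP[OF m] unfolding N_def by simp

lemma NS: "m \<in> S \<Longrightarrow> m + int (N m) *s e \<in> S"
  using aS aN by blast

lemma P_shift: assumes m: "m \<in> S" shows "P (m + int (N m) *s e) = 1"
proof (rule poly_eqI)
  fix i
  have ms: "m + int (N m) *s e \<in> S" using NS[OF m] .
  show "coeff (P (m + int (N m) *s e)) i = coeff 1 i"
  proof (cases i)
    case 0 then show ?thesis using a0[OF ms] coeffP[OF ms] by simp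
  next
    case (Suc k)
    have "a (N m) m * a i (m + int (N m) *s e) = of_nat ((i + N m) choose i) * a (i + N m) m"
      by (rule aI[OF m aN[OF m]])
    also have "a (i + N m) m = 0" using a_big[OF m] Suc by simp
    finally have "a i (m + int (N m) *s e) = 0" using aN[OF m] by simp
    then show ?thesis using coeffP[OF ms] Suc by simp
  qed
qed

lemma N_shift: assumes "m \<in> S" shows "N (m + int (N m) *s e) = 0"
proof -
  have "P (m + int (N m) *s e) = 1" by (rule P_shift[OF assms])
  then have "degree (P (m + int (N m) *s e)) = 0" by simp
  then show ?thesis unfolding N_def[of "m + int (N m) *s e"] .
qed

lemma P_zero: "P 0 = 1"
proof -
  have "P 0 * P 0 = P 0 * 1" using P_add[OF S0 S0] by simp
  then show ?thesis using P_nz[OF S0] mult_left_cancel by blast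
qed

lemma S_nsmult: "m \<in> S \<Longrightarrow> int k *s m \<in> S"
proof (induction k)
  case 0 then show ?case using S0 by simp
next
  case (Suc k)
  have "int (Suc k) *s m = m + int k *s m" by (simp add: vector_sadd_rdistrib)
  then show ?case using Sadd Suc by simp
qed

lemma P_pow: "m \<in> S \<Longrightarrow> P (int k *s m) = P m ^ k"
proof (induction k)
  case 0 then show ?case using P_zero by simp
next
  case (Suc k)
  have "int (Suc k) *s m = m + int k *s m" by (simp add: vector_sadd_rdistrib)
  then show ?case using Suc P_add[OF Suc.prems S_nsmult[OF Suc.prems]] by simp
qed

lemma nontriv_a:
  assumes "\<not> trivial_HD S D"
  shows "\<exists>i>0. \<exists>m\<in>S. a i m \<noteq> 0"
proof (rule ccontr)
  assume na: "\<not> ?thesis"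
  have "D i f = 0" if "i > 0" "f \<in> semigroup_alg S" for i f
  proof -
    have ks: "Poly_Mapping.keys f \<subseteq> S" using that(2) unfolding semigroup_alg_def by simp
    have "f = (\<Sum>m\<in>Poly_Mapping.keys f. scal (Poly_Mapping.lookup f m) (chi m))"
      using pm_expand[of f] by (simp add: scal_single chi_def)
    moreover have "D i (\<Sum>m\<in>A. scal (Poly_Mapping.lookup f m) (chi m)) = 0" if "finite A" "A \<subseteq> S" for A
      using that
    proof (induction A rule: finite_induct)
      case empty then show ?case using D_zero by simp
    next
      case (insert x A)
      have xs: "x \<in> S" using insert by simp
      have in1: "scal (Poly_Mapping.lookup f x) (chi x) \<in> semigroup_alg S"
        unfolding semigroup_alg_def scal_single chi_def using xs by auto
      have "Poly_Mapping.keys (\<Sum>m\<in>A. scal (Poly_Mapping.lookup f m) (chi m)) \<subseteq> S"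
      proof (rule order_trans[OF keys_sum])
        show "(\<Union>m\<in>A. Poly_Mapping.keys (scal (Poly_Mapping.lookup f m) (chi m))) \<subseteq> S"
          using insert.prems by (auto simp: scal_single chi_def)
      qed
      then have in2: "(\<Sum>m\<in>A. scal (Poly_Mapping.lookup f m) (chi m)) \<in> semigroup_alg S"
        unfolding semigroup_alg_def by simp
      have "D i (scal (Poly_Mapping.lookup f x) (chi x)) = scal (Poly_Mapping.lookup f x) (D i (chi x))"
        by (rule LF_scal[OF chi_in[OF xs]])
      also have "D i (chi x) = 0"
      proof -
        have "a i x = 0" using na \<open>i > 0\<close> xs by blast
        then show ?thesis unfolding Dchi[OF xs] by simp
      qed
      finally show ?case using insert D_add[OF in1 in2] by (simp add: scal_def)
    qed
    ultimately show ?thesis using ks by (metis finite_keys)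
  qed
  then show False using assms unfolding trivial_HD_def by blast
qed

end


definition Tm :: "(int^'n \<Rightarrow> int^'n) \<Rightarrow> (int^'n \<Rightarrow> 'k) \<Rightarrow> (int^'n \<Rightarrow>\<^sub>0 'k::field) \<Rightarrow> (int^'n \<Rightarrow>\<^sub>0 'k)" where
  "Tm h w f = (\<Sum>m\<in>Poly_Mapping.keys f. Poly_Mapping.single (h m) (Poly_Mapping.lookup f m * w m))"

lemma Tm_gen: assumes "finite A" "Poly_Mapping.keys f \<subseteq> A"
  shows "Tm h w f = (\<Sum>m\<in>A. Poly_Mapping.single (h m) (Poly_Mapping.lookup f m * w m))"
  unfolding Tm_def
  by (rule sum.mono_neutral_right[symmetric]) (use assms in \<open>auto simp: in_keys_iff\<close>)

lemma Tm_add: "Tm h w (f + g) = Tm h w f + Tm h w g"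
proof -
  define A where "A = Poly_Mapping.keys f \<union> Poly_Mapping.keys g"
  have fA: "finite A" unfolding A_def by simp
  have "Poly_Mapping.keys (f + g) \<subseteq> A" unfolding A_def by (rule keys_add)
  then have "Tm h w (f + g) = (\<Sum>m\<in>A. Poly_Mapping.single (h m) (Poly_Mapping.lookup (f + g) m * w m))"
    using fA by (rule Tm_gen[rotated])
  also have "\<dots> = (\<Sum>m\<in>A. Poly_Mapping.single (h m) (Poly_Mapping.lookup f m * w m)) + (\<Sum>m\<in>A. Poly_Mapping.single (h m) (Poly_Mapping.lookup g m * w m))"
    by (simp add: lookup_add distrib_right single_add sum.distrib)
  also have "\<dots> = Tm h w f + Tm h w g"
    using Tm_gen[OF fA, of f] Tm_gen[OF fA, of g] unfolding A_def by simp
  finally show ?thesis .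
qed

lemma Tm_zero: "Tm h w 0 = 0" unfolding Tm_def by simp

lemma Tm_sum: "Tm h w (\<Sum>j\<in>J. g j) = (\<Sum>j\<in>J. Tm h w (g j))"
  by (induction J rule: infinite_finite_induct) (auto simp: Tm_zero Tm_add)

lemma Tm_single: "Tm h w (Poly_Mapping.single x b) = Poly_Mapping.single (h x) (b * w x)"
  by (cases "b = 0") (auto simp: Tm_def)

lemma lookup_scal: "Poly_Mapping.lookup (scal c f) k = c * Poly_Mapping.lookup f k"
  unfolding scal_def mult_map_scale_conv_mult[symmetric]
  by (simp add: Poly_Mapping.map.rep_eq when_def)

lemma scal_sum: "scal c (\<Sum>j\<in>J. g j) = (\<Sum>j\<in>J. scal c (g j))"
  unfolding scal_def by (simp add: sum_distrib_left)

lemma Tm_scal: "Tm h w (scal c f) = scal c (Tm h w f)"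
proof -
  have k: "Poly_Mapping.keys (scal c f) \<subseteq> Poly_Mapping.keys f"
    by (auto simp: in_keys_iff lookup_scal)
  have "Tm h w (scal c f) = (\<Sum>m\<in>Poly_Mapping.keys f. Poly_Mapping.single (h m) (Poly_Mapping.lookup (scal c f) m * w m))"
    by (rule Tm_gen[OF finite_keys k])
  also have "\<dots> = (\<Sum>m\<in>Poly_Mapping.keys f. scal c (Poly_Mapping.single (h m) (Poly_Mapping.lookup f m * w m)))"
    by (simp add: lookup_scal scal_single mult.assoc)
  also have "\<dots> = scal c (Tm h w f)" unfolding Tm_def scal_sum ..
  finally show ?thesis .
qed

lemma Tm_keys: "Poly_Mapping.keys (Tm h w f) \<subseteq> {h m | m. m \<in> Poly_Mapping.keys f \<and> w m \<noteq> 0}"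
proof -
  have "Poly_Mapping.keys (Tm h w f) \<subseteq> (\<Union>m\<in>Poly_Mapping.keys f. Poly_Mapping.keys (Poly_Mapping.single (h m) (Poly_Mapping.lookup f m * w m)))"
    unfolding Tm_def by (rule keys_sum)
  also have "\<dots> \<subseteq> {h m | m. m \<in> Poly_Mapping.keys f \<and> w m \<noteq> 0}"
    by (auto split: if_splits)
  finally show ?thesis .
qed

lemma binom_iter: "j \<le> a \<Longrightarrow> (a choose j) * ((a - j) choose i) = ((i + j) choose i) * (a choose (i + j))"
proof (cases "i + j \<le> a")
  case True
  assume "j \<le> a"
  have "(a choose (i + j)) * ((i + j) choose j) = (a choose j) * ((a - j) choose (i + j - j))"
    by (rule choose_mult) (use True in auto)
  moreover have "(i + j) choose j = (i + j) choose i" using binomial_symmetric[of j "i + j"] by simp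
  ultimately show ?thesis by (simp add: mult.commute)
next
  case False
  assume "j \<le> a"
  then have "a - j < i" using False by linarith
  then show ?thesis using False by (simp add: binomial_eq_0)
qed

locale conv_setup =
  fixes S :: "(int^'n) set" and e \<rho> :: "int^'n" and c :: "'k::field"
  assumes S0: "0 \<in> S" and Sadd: "\<And>a b. a \<in> S \<Longrightarrow> b \<in> S \<Longrightarrow> a + b \<in> S"
    and C1: "\<And>m. m \<in> S \<Longrightarrow> pair_MN m \<rho> \<ge> 0"
    and C2: "\<And>m i. m \<in> S \<Longrightarrow> 0 \<le> i \<Longrightarrow> i \<le> pair_MN m \<rho> \<Longrightarrow> m + i *s e \<in> S"
    and C3: "pair_MN e \<rho> = -1"
    and C4: "\<exists>m1\<in>S. pair_MN m1 \<rho> = 1"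
    and cnz: "c \<noteq> 0"
begin

definition w :: "nat \<Rightarrow> int^'n \<Rightarrow> 'k" where
  "w i m = c ^ i * of_nat (nat (pair_MN m \<rho>) choose i)"

definition Dc :: "nat \<Rightarrow> (int^'n \<Rightarrow>\<^sub>0 'k) \<Rightarrow> (int^'n \<Rightarrow>\<^sub>0 'k)" where
  "Dc i = Tm (\<lambda>m. m + int i *s e) (w i)"

lemma pMN_add: "pair_MN (a + b) r = pair_MN a r + pair_MN b r"
  unfolding pair_MN_def by (simp add: distrib_right sum.distrib)
lemma pMN_sm: "pair_MN (k *s a) r = k * pair_MN a r"
  unfolding pair_MN_def by (simp add: sum_distrib_left algebra_simps)

lemma Dc_chi: "Dc i (chi m) = scal (w i m) (chi (m + int i *s e))"
  unfolding Dc_def chi_def by (simp add: Tm_single scal_single)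

lemma w_mult: assumes m: "m \<in> S" and m': "m' \<in> S"
  shows "(\<Sum>j\<le>i. w j m * w (i - j) m') = w i (m + m')"
proof -
  define A where "A = nat (pair_MN m \<rho>)"
  define B where "B = nat (pair_MN m' \<rho>)"
  have AB: "nat (pair_MN (m + m') \<rho>) = A + B" unfolding A_def B_def pMN_add using C1[OF m] C1[OF m'] by simp
  have "(\<Sum>j\<le>i. w j m * w (i - j) m') = (\<Sum>j\<le>i. c ^ i * of_nat ((A choose j) * (B choose (i - j))))"
  proof (rule sum.cong[OF refl])
    fix j assume "j \<in> {..i}"
    then have "c ^ j * c ^ (i - j) = c ^ i" by (simp add: power_add[symmetric])
    then show "w j m * w (i - j) m' = c ^ i * of_nat ((A choose j) * (B choose (i - j)))"
      unfolding w_def A_def B_def by (simp add: algebra_simps)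
  qed
  also have "\<dots> = c ^ i * of_nat (\<Sum>j\<le>i. (A choose j) * (B choose (i - j)))"
    by (simp add: sum_distrib_left)
  also have "\<dots> = w i (m + m')" unfolding vandermonde w_def AB ..
  finally show ?thesis .
qed

lemma w_iter: assumes m: "m \<in> S"
  shows "w j m * w i (m + int j *s e) = of_nat ((i + j) choose i) * w (i + j) m"
proof -
  define A where "A = nat (pair_MN m \<rho>)"
  have pe: "pair_MN (m + int j *s e) \<rho> = pair_MN m \<rho> - int j" by (simp add: pMN_add pMN_sm C3)
  show ?thesis
  proof (cases "j \<le> A")
    case True
    then have "nat (pair_MN (m + int j *s e) \<rho>) = A - j" unfolding pe A_def by simp
    then have "w j m * w i (m + int j *s e) = c ^ (i + j) * of_nat ((A choose j) * ((A - j) choose i))"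
      unfolding w_def A_def[symmetric] by (simp add: power_add algebra_simps)
    also have "\<dots> = c ^ (i + j) * of_nat (((i + j) choose i) * (A choose (i + j)))"
      by (simp only: binom_iter[OF True])
    also have "\<dots> = of_nat ((i + j) choose i) * w (i + j) m"
      unfolding w_def A_def[symmetric] by (simp add: algebra_simps)
    finally show ?thesis .
  next
    case False
    then have z1: "nat (pair_MN m \<rho>) choose j = 0" and z2: "nat (pair_MN m \<rho>) choose (i + j) = 0"
      unfolding A_def by (simp_all add: binomial_eq_0)
    show ?thesis unfolding w_def z1 z2 by simp
  qed
qed

lemma Dc_mem: "f \<in> semigroup_alg S \<Longrightarrow> Dc i f \<in> semigroup_alg S"
proof -
  assume f: "f \<in> semigroup_alg S"
  have "Poly_Mapping.keys (Dc i f) \<subseteq> S"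
  proof
    fix x assume "x \<in> Poly_Mapping.keys (Dc i f)"
    then obtain m where m: "x = m + int i *s e" "m \<in> Poly_Mapping.keys f" "w i m \<noteq> 0"
      using Tm_keys unfolding Dc_def by blast
    have mS: "m \<in> S" using f m(2) unfolding semigroup_alg_def by blast
    have "nat (pair_MN m \<rho>) choose i \<noteq> 0" using m(3) unfolding w_def by (metis mult_zero_right of_nat_0)
    then have "i \<le> nat (pair_MN m \<rho>)" by (simp add: binomial_eq_0_iff not_less)
    then have "int i \<le> pair_MN m \<rho>" using le_nat_iff C1[OF mS] by auto
    then show "x \<in> S" using C2[OF mS] m(1) by simp
  qed
  then show ?thesis unfolding semigroup_alg_def by simp
qed

lemma Dc_0: "Dc 0 f = f"
  unfolding Dc_def Tm_def w_def using pm_expand[of f] by simp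

lemma expand_S: assumes "f \<in> semigroup_alg S"
  shows "f = (\<Sum>m\<in>Poly_Mapping.keys f. Poly_Mapping.single m (Poly_Mapping.lookup f m))"
    "Poly_Mapping.keys f \<subseteq> S"
  using pm_expand assms unfolding semigroup_alg_def by auto

lemma Dc_expand: "Dc i f = (\<Sum>m\<in>Poly_Mapping.keys f. Poly_Mapping.single (m + int i *s e) (Poly_Mapping.lookup f m * w i m))"
  unfolding Dc_def Tm_def ..

lemma Dc_leib: assumes f: "f \<in> semigroup_alg S" and g: "g \<in> semigroup_alg S"
  shows "Dc i (f * g) = (\<Sum>j\<le>i. Dc j f * Dc (i - j) g)"
proof -
  define F where "F = Poly_Mapping.keys f"
  define G where "G = Poly_Mapping.keys g"
  have FS: "F \<subseteq> S" and GS: "G \<subseteq> S" using expand_S f g unfolding F_def G_def by auto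
  let ?f = "Poly_Mapping.lookup f" and ?g = "Poly_Mapping.lookup g"
  have fg: "f * g = (\<Sum>m\<in>F. \<Sum>m'\<in>G. Poly_Mapping.single (m + m') (?f m * ?g m'))"
    by (subst expand_S(1)[OF f], subst expand_S(1)[OF g])
       (simp add: F_def G_def sum_product mult_single)
  have "Dc i (f * g) = (\<Sum>m\<in>F. \<Sum>m'\<in>G. Poly_Mapping.single (m + m' + int i *s e) (?f m * ?g m' * w i (m + m')))"
    unfolding fg Dc_def Tm_sum Tm_single ..
  also have "\<dots> = (\<Sum>m\<in>F. \<Sum>m'\<in>G. \<Sum>j\<le>i. Poly_Mapping.single (m + m' + int i *s e) (?f m * w j m * (?g m' * w (i - j) m')))"
  proof (intro sum.cong refl)
    fix m m' assume mF: "m \<in> F" and m'G: "m' \<in> G"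
    have wm: "(\<Sum>j\<le>i. w j m * w (i - j) m') = w i (m + m')" using w_mult[of m m' i] FS GS mF m'G by auto
    have "?f m * ?g m' * w i (m + m') = (\<Sum>j\<le>i. ?f m * w j m * (?g m' * w (i - j) m'))"
      unfolding wm[symmetric] sum_distrib_left by (simp add: mult_ac)
    then show "Poly_Mapping.single (m + m' + int i *s e) (?f m * ?g m' * w i (m + m')) =
      (\<Sum>j\<le>i. Poly_Mapping.single (m + m' + int i *s e) (?f m * w j m * (?g m' * w (i - j) m')))"
      by (simp add: single_sum)
  qed
  also have "\<dots> = (\<Sum>j\<le>i. \<Sum>m\<in>F. \<Sum>m'\<in>G. Poly_Mapping.single (m + m' + int i *s e) (?f m * w j m * (?g m' * w (i - j) m')))"
    by (simp add: sum.swap[of _ "{..i}"])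
  also have "\<dots> = (\<Sum>j\<le>i. Dc j f * Dc (i - j) g)"
  proof (rule sum.cong[OF refl])
    fix j assume "j \<in> {..i}"
    then have ji: "j \<le> i" by simp
    have X: "m + int j *s e + (m' + int (i - j) *s e) = m + m' + int i *s e" for m m'
      using ji by (simp add: vec_eq_iff of_nat_diff algebra_simps)
    show "(\<Sum>m\<in>F. \<Sum>m'\<in>G. Poly_Mapping.single (m + m' + int i *s e) (?f m * w j m * (?g m' * w (i - j) m'))) = Dc j f * Dc (i - j) g"
      unfolding Dc_expand F_def[symmetric] G_def[symmetric] sum_product mult_single X ..
  qed
  finally show ?thesis .
qed

lemma Dc_fin: assumes f: "f \<in> semigroup_alg S" shows "finite {i. Dc i f \<noteq> 0}"
proof -
  define B where "B = (\<Sum>m\<in>Poly_Mapping.keys f. nat (pair_MN m \<rho>))"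
  have Bm: "nat (pair_MN m \<rho>) \<le> B" if "m \<in> Poly_Mapping.keys f" for m
    unfolding B_def by (rule member_le_sum) (use that in auto)
  have wz: "w i m = 0" if "m \<in> Poly_Mapping.keys f" "B < i" for m i
  proof -
    have "nat (pair_MN m \<rho>) < i" using Bm[OF that(1)] that(2) by linarith
    then have "nat (pair_MN m \<rho>) choose i = 0" by (rule binomial_eq_0)
    then show ?thesis unfolding w_def by (metis mult_zero_right of_nat_0)
  qed
  have Dz: "Dc i f = 0" if "B < i" for i
    unfolding Dc_expand by (rule sum.neutral) (use wz that in simp)
  have "{i. Dc i f \<noteq> 0} \<subseteq> {..B}"
  proof
    fix i assume "i \<in> {i. Dc i f \<noteq> 0}"
    then have "\<not> B < i" using Dz by auto
    then show "i \<in> {..B}" by simp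
  qed
  then show ?thesis by (rule finite_subset) simp
qed

lemma Dc_iter: assumes f: "f \<in> semigroup_alg S"
  shows "Dc i (Dc j f) = scal (of_nat ((i + j) choose i)) (Dc (i + j) f)"
proof -
  have FS: "Poly_Mapping.keys f \<subseteq> S" using expand_S(2)[OF f] .
  have "Dc i (Dc j f) = (\<Sum>m\<in>Poly_Mapping.keys f. Poly_Mapping.single (m + int j *s e + int i *s e) (Poly_Mapping.lookup f m * w j m * w i (m + int j *s e)))"
    unfolding Dc_expand[of j] unfolding Dc_def Tm_sum Tm_single ..
  also have "\<dots> = (\<Sum>m\<in>Poly_Mapping.keys f. scal (of_nat ((i + j) choose i)) (Poly_Mapping.single (m + int (i + j) *s e) (Poly_Mapping.lookup f m * w (i + j) m)))"
  proof (rule sum.cong[OF refl])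
    fix m assume m: "m \<in> Poly_Mapping.keys f"
    have X: "m + int j *s e + int i *s e = m + int (i + j) *s e" by (simp add: vec_eq_iff algebra_simps)
    show "Poly_Mapping.single (m + int j *s e + int i *s e) (Poly_Mapping.lookup f m * w j m * w i (m + int j *s e)) =
          scal (of_nat ((i + j) choose i)) (Poly_Mapping.single (m + int (i + j) *s e) (Poly_Mapping.lookup f m * w (i + j) m))"
    proof -
      have mS: "m \<in> S" using FS m by blast
      have "Poly_Mapping.lookup f m * w j m * w i (m + int j *s e) = Poly_Mapping.lookup f m * (w j m * w i (m + int j *s e))"
        by (simp only: mult.assoc)
      also have "\<dots> = of_nat ((i + j) choose i) * (Poly_Mapping.lookup f m * w (i + j) m)"
        unfolding w_iter[OF mS] by (simp only: mult.assoc mult.left_commute)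
      finally have eq: "Poly_Mapping.lookup f m * w j m * w i (m + int j *s e) = of_nat ((i + j) choose i) * (Poly_Mapping.lookup f m * w (i + j) m)" .
      show ?thesis unfolding X scal_single eq by (rule refl)
    qed
  qed
  also have "\<dots> = scal (of_nat ((i + j) choose i)) (Dc (i + j) f)" unfolding Dc_expand scal_sum ..
  finally show ?thesis .
qed

lemma Dc_LFIHD: "LFIHD S Dc"
  unfolding LFIHD_def
proof (intro conjI allI ballI)
  show "Dc i f \<in> semigroup_alg S" if "f \<in> semigroup_alg S" for i f using Dc_mem that .
  show "Dc i (f + g) = Dc i f + Dc i g" for i f g unfolding Dc_def by (rule Tm_add)
  show "Dc i (scal c' f) = scal c' (Dc i f)" for i c' f unfolding Dc_def by (rule Tm_scal)
  show "Dc 0 f = f" for f by (rule Dc_0)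
  show "Dc i (f * g) = (\<Sum>j\<le>i. Dc j f * Dc (i - j) g)" if "f \<in> semigroup_alg S" "g \<in> semigroup_alg S" for i f g
    using Dc_leib that .
  show "finite {i. Dc i f \<noteq> 0}" if "f \<in> semigroup_alg S" for f using Dc_fin that .
  show "Dc i (Dc j f) = scal (of_nat ((i + j) choose i)) (Dc (i + j) f)" if "f \<in> semigroup_alg S" for i j f
    using Dc_iter that .
qed

lemma converse_main:
  "\<exists>D :: nat \<Rightarrow> (int^'n \<Rightarrow>\<^sub>0 'k) \<Rightarrow> (int^'n \<Rightarrow>\<^sub>0 'k).
     LFIHD S D \<and> \<not> trivial_HD S D \<and> homogeneous_of_degree S D e \<and>
     (\<forall>i. \<forall>m\<in>S. D i (chi m) = scal (c ^ i * of_nat (nat (pair_MN m \<rho>) choose i)) (chi (m + int i *s e)))"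
proof (intro exI[of _ Dc] conjI)
  show "LFIHD S Dc" by (rule Dc_LFIHD)
  obtain m1 where m1: "m1 \<in> S" "pair_MN m1 \<rho> = 1" using C4 by blast
  show "\<not> trivial_HD S Dc"
  proof
    assume "trivial_HD S Dc"
    then have tr: "\<forall>i>0. \<forall>f\<in>semigroup_alg S. Dc i f = 0" unfolding trivial_HD_def .
    have ci: "(chi m1 :: int^'n \<Rightarrow>\<^sub>0 'k) \<in> semigroup_alg S" by (rule chi_in[OF m1(1)])
    have "Dc 1 (chi m1) = 0" using tr[rule_format, OF zero_less_one ci] .
    moreover have "Dc 1 (chi m1) = Poly_Mapping.single (m1 + e) c"
      unfolding Dc_chi w_def using m1(2) by (simp add: scal_single chi_def)
    ultimately have "Poly_Mapping.single (m1 + e) c = 0" by simp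
    then show False using single_nz[OF cnz, of "m1 + e"] by simp
  qed
  show "homogeneous_of_degree S Dc e"
    unfolding homogeneous_of_degree_def Dc_chi by (simp add: scal_single chi_def)
  show "\<forall>i. \<forall>m\<in>S. Dc i (chi m) = scal (c ^ i * of_nat (nat (pair_MN m \<rho>) choose i)) (chi (m + int i *s e))"
    unfolding Dc_chi w_def by simp
qed

end


context gcone begin

lemma forward_main:
  fixes D :: "nat \<Rightarrow> (int^'n \<Rightarrow>\<^sub>0 'k::field) \<Rightarrow> (int^'n \<Rightarrow>\<^sub>0 'k)"
  assumes LF: "LFIHD S D" and nt: "\<not> trivial_HD S D" and hom: "homogeneous_of_degree S D e"
  shows "\<exists>e \<rho> (c::'k). demazure_root \<sigma> e \<rho> \<and> c \<noteq> 0 \<and>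
               (\<forall>i. \<forall>m\<in>S. D i (chi m) = scal (c ^ i * of_nat (nat (pair_MN m \<rho>) choose i)) (chi (m + int i *s e)))"
proof -
  interpret H: hd_setup S D e
    by unfold_locales (use dlp_zero dlp_add LF hom in auto)
  obtain i0 m0 where im0: "i0 > 0" "m0 \<in> S" "H.a i0 m0 \<noteq> 0" using H.nontriv_a[OF nt] by blast
  have Nm0: "H.N m0 > 0"
  proof (rule ccontr)
    assume "\<not> H.N m0 > 0"
    then have "H.N m0 < i0" using im0(1) by simp
    then show False using H.a_big[OF im0(2)] im0(3) by blast
  qed
  obtain \<rho> where \<rho>: "demazure_root \<sigma> e \<rho>" "\<forall>a\<in>S. int (H.N a) = pair_MN a \<rho>"
    using forward_geo[of H.N e m0] H.N_add H.NS H.N_shift im0(2) Nm0 by blast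
  obtain m1 where m1: "m1 \<in> S" "pair_MN m1 \<rho> = 1" using exists_m1[OF \<rho>(1)] by blast
  have Nm1: "H.N m1 = 1" using \<rho>(2) m1 by fastforce
  define l where "l = H.a 1 m1"
  have lnz: "l \<noteq> 0" unfolding l_def using H.aN[OF m1(1)] Nm1 by simp
  have Pm1: "H.P m1 = [:1, l:]"
  proof (rule poly_eqI)
    fix k show "coeff (H.P m1) k = coeff [:1, l:] k"
    proof (cases k)
      case 0 then show ?thesis using H.coeffP[OF m1(1)] H.a0[OF m1(1)] by simp
    next
      case (Suc k')
      show ?thesis
      proof (cases k')
        case 0 then show ?thesis using H.coeffP[OF m1(1)] Suc l_def by simp
      next
        case (Suc k'')
        have "H.a k m1 = 0" using H.a_big[OF m1(1)] Nm1 \<open>k = Suc k'\<close> Suc by simp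
        then show ?thesis using H.coeffP[OF m1(1)] \<open>k = Suc k'\<close> Suc by simp
      qed
    qed
  qed
  define Y where "Y = m1 + e"
  have YS: "Y \<in> S" and PY: "H.P Y = 1" using H.NS[OF m1(1)] H.P_shift[OF m1(1)] Nm1 unfolding Y_def by simp_all
  have key: "D i (chi m) = scal (l ^ i * of_nat (nat (pair_MN m \<rho>) choose i)) (chi (m + int i *s e))"
    if m: "m \<in> S" for i m
  proof -
    define n where "n = H.N m"
    have nn: "n = nat (pair_MN m \<rho>)" unfolding n_def using \<rho>(2) m by (metis nat_int)
    define X where "X = m + int n *s e"
    have XS: "X \<in> S" and PX: "H.P X = 1" using H.NS[OF m] H.P_shift[OF m] unfolding X_def n_def by simp_all
    have veq: "m + int n *s Y = X + int n *s m1"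
      unfolding X_def Y_def by (simp add: vec_eq_iff algebra_simps)
    have "H.P (m + int n *s Y) = H.P m * H.P Y ^ n"
      using H.P_add[OF m H.S_nsmult[OF YS]] H.P_pow[OF YS] by simp
    also have "\<dots> = H.P m" using PY by simp
    finally have e1: "H.P (m + int n *s Y) = H.P m" .
    have "H.P (X + int n *s m1) = H.P X * H.P m1 ^ n"
      using H.P_add[OF XS H.S_nsmult[OF m1(1)]] H.P_pow[OF m1(1)] by simp
    also have "\<dots> = [:1, l:] ^ n" using PX Pm1 by simp
    finally have Pm: "H.P m = [:1, l:] ^ n" using e1 veq by simp
    have "H.a i m = l ^ i * of_nat (n choose i)"
      using H.coeffP[OF m, of i] Pm coeff_lin_pow[of l n i] by simp
    then show ?thesis using H.Dchi[OF m] nn by (simp add: scal_single chi_def)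
  qed
  show ?thesis using \<rho>(1) lnz key by blast
qed

end

theorem theorem5p4p5:
  fixes \<sigma> :: "(rat^'n) set"
  assumes "polyhedral_cone \<sigma>" and "strongly_convex \<sigma>" and "\<sigma> \<noteq> {0}"
  shows "(\<forall>D :: nat \<Rightarrow> (int^'n \<Rightarrow>\<^sub>0 'k::field) \<Rightarrow> (int^'n \<Rightarrow>\<^sub>0 'k).
            LFIHD (dual_lattice_points \<sigma>) D \<and> \<not> trivial_HD (dual_lattice_points \<sigma>) D \<and>
            (\<exists>e. homogeneous_of_degree (dual_lattice_points \<sigma>) D e) \<longrightarrow>
            (\<exists>e \<rho> (c::'k). demazure_root \<sigma> e \<rho> \<and> c \<noteq> 0 \<and>
               (\<forall>i. \<forall>m\<in>dual_lattice_points \<sigma>.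
                  D i (chi m) = scal (c ^ i * of_nat (nat (pair_MN m \<rho>) choose i)) (chi (m + int i *s e)))))
       \<and> (\<forall>e \<rho> (c::'k). demazure_root \<sigma> e \<rho> \<and> c \<noteq> 0 \<longrightarrow>
            (\<exists>D :: nat \<Rightarrow> (int^'n \<Rightarrow>\<^sub>0 'k) \<Rightarrow> (int^'n \<Rightarrow>\<^sub>0 'k).
               LFIHD (dual_lattice_points \<sigma>) D \<and> \<not> trivial_HD (dual_lattice_points \<sigma>) D \<and>
               homogeneous_of_degree (dual_lattice_points \<sigma>) D e \<and>
               (\<forall>i. \<forall>m\<in>dual_lattice_points \<sigma>.
                  D i (chi m) = scal (c ^ i * of_nat (nat (pair_MN m \<rho>) choose i)) (chi (m + int i *s e)))))"
proof -
  obtain G0 where G0: "finite G0" "\<sigma> = qcone G0"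
    using assms(1) unfolding polyhedral_cone_def qcone_def by blast
  obtain G where G: "G \<subseteq> G0" "qcone G = qcone G0" "\<forall>g\<in>G. g \<notin> qcone (G - {g})"
    using minimal_gen[OF G0(1)] by blast
  interpret gcone G \<sigma>
    by unfold_locales (use G G0 assms(2) finite_subset in auto)
  show ?thesis
  proof (intro conjI allI impI)
    fix D :: "nat \<Rightarrow> (int^'n \<Rightarrow>\<^sub>0 'k::field) \<Rightarrow> (int^'n \<Rightarrow>\<^sub>0 'k)"
    assume H: "LFIHD S D \<and> \<not> trivial_HD S D \<and> (\<exists>e. homogeneous_of_degree S D e)"
    then obtain e where "homogeneous_of_degree S D e" by blast
    then show "\<exists>e \<rho> (c::'k). demazure_root \<sigma> e \<rho> \<and> c \<noteq> 0 \<and>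
               (\<forall>i. \<forall>m\<in>S. D i (chi m) = scal (c ^ i * of_nat (nat (pair_MN m \<rho>) choose i)) (chi (m + int i *s e)))"
      using forward_main H by blast
  next
    fix e \<rho> and c :: 'k
    assume dc: "demazure_root \<sigma> e \<rho> \<and> c \<noteq> 0"
    interpret C: conv_setup S e \<rho> c
    proof unfold_locales
      show "0 \<in> S" by (rule dlp_zero)
      show "a + b \<in> S" if "a \<in> S" "b \<in> S" for a b using dlp_add that .
      show "pair_MN m \<rho> \<ge> 0" if "m \<in> S" for m
        using ray_nonneg[OF that] dc unfolding demazure_root_def by blast
      show "m + i *s e \<in> S" if "m \<in> S" "0 \<le> i" "i \<le> pair_MN m \<rho>" for m i
        using conv_mem[OF conjunct1[OF dc] that] .
      show "pair_MN e \<rho> = -1" using dc unfolding demazure_root_def by blast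
      show "\<exists>m1\<in>S. pair_MN m1 \<rho> = 1" using exists_m1 dc by blast
      show "c \<noteq> 0" using dc by blast
    qed
    show "\<exists>D :: nat \<Rightarrow> (int^'n \<Rightarrow>\<^sub>0 'k) \<Rightarrow> (int^'n \<Rightarrow>\<^sub>0 'k).
               LFIHD S D \<and> \<not> trivial_HD S D \<and> homogeneous_of_degree S D e \<and>
               (\<forall>i. \<forall>m\<in>S. D i (chi m) = scal (c ^ i * of_nat (nat (pair_MN m \<rho>) choose i)) (chi (m + int i *s e)))"
      by (rule C.converse_main)
  qed
qed


end
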